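(* Let $A$ be a unital C$^*$-algebra and let $\gamma,\varepsilon>0$. (1) For every $f\in C([0,1])$ there exists $\delta>0$ such that for all positive contractions $a,b\in A$ and all $\tau\in T(A)$ with $\|a-b\|_{2,\tau}<\delta$ we have $\|f(a)-f(b)\|_{2,\tau}<\gamma$. (2) There is $\delta>0$ such that for all positive contractions $a,b\in A$ and all $\tau\in T(A)$ with $\|a-b\|_{2,\tau}<\delta$ we have $d_\tau((a-\varepsilon)_+)<d_\tau(b)+\gamma$.
   Context: $T(A)$ is the set of tracial states of $A$; $\|x\|_{2,\tau}=\tau(x^*x)^{1/2}$. For $a\ge0$, $(a-\varepsilon)_+=f_\varepsilon(a)$ with $f_\varepsilon(t)=\max\{0,t-\varepsilon\}$, and $d_\tau(a)=\lim_{n\to\infty}\tau(a^{1/n})$. *)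

theory Defs
  imports "HOL-Analysis.Analysis" "HOL-Computational_Algebra.Polynomial"
begin

text \<open>A unital C*-algebra: a unital Banach algebra (real structure from the type class)
  together with a compatible complex scalar multiplication and an involution
  satisfying the C*-identity.\<close>

locale unital_cstar_algebra =
  fixes star :: "'a::{real_normed_algebra_1,banach} \<Rightarrow> 'a"
    and scC :: "complex \<Rightarrow> 'a \<Rightarrow> 'a"
  assumes scC_add_left: "scC (c + d) x = scC c x + scC d x"
    and scC_add_right: "scC c (x + y) = scC c x + scC c y"
    and scC_assoc: "scC c (scC d x) = scC (c * d) x"
    and scC_one: "scC 1 x = x"
    and scC_of_real: "scC (complex_of_real r) x = scaleR r x"
    and scC_mult_left: "scC c x * y = scC c (x * y)"
    and scC_mult_right: "x * scC c y = scC c (x * y)"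
    and norm_scC: "norm (scC c x) = cmod c * norm x"
    and star_add: "star (x + y) = star x + star y"
    and star_mult: "star (x * y) = star y * star x"
    and star_star: "star (star x) = x"
    and star_scC: "star (scC c x) = scC (cnj c) (star x)"
    and cstar_identity: "norm (star x * x) = (norm x)\<^sup>2"

definition positive_contraction :: "('a::real_normed_algebra_1 \<Rightarrow> 'a) \<Rightarrow> 'a \<Rightarrow> bool" where
  "positive_contraction star a \<longleftrightarrow> (\<exists>b. a = star b * b) \<and> norm a \<le> 1"

definition tracial_state ::
  "('a::real_normed_algebra_1 \<Rightarrow> 'a) \<Rightarrow> (complex \<Rightarrow> 'a \<Rightarrow> 'a) \<Rightarrow> ('a \<Rightarrow> complex) \<Rightarrow> bool" where
  "tracial_state star scC \<tau> \<longleftrightarrow>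
     (\<forall>x y. \<tau> (x + y) = \<tau> x + \<tau> y) \<and>
     (\<forall>c x. \<tau> (scC c x) = c * \<tau> x) \<and>
     (\<forall>x. Im (\<tau> (star x * x)) = 0 \<and> Re (\<tau> (star x * x)) \<ge> 0) \<and>
     \<tau> 1 = 1 \<and>
     (\<forall>x y. \<tau> (x * y) = \<tau> (y * x))"

definition norm2 :: "('a::real_normed_algebra_1 \<Rightarrow> 'a) \<Rightarrow> ('a \<Rightarrow> complex) \<Rightarrow> 'a \<Rightarrow> real" where
  "norm2 star \<tau> x = sqrt (Re (\<tau> (star x * x)))"

definition peval :: "(complex \<Rightarrow> 'a \<Rightarrow> 'a) \<Rightarrow> complex poly \<Rightarrow> 'a::real_normed_algebra_1 \<Rightarrow> 'a" where
  "peval scC p a = (\<Sum>i\<le>degree p. scC (coeff p i) (a ^ i))"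

definition cfc :: "(complex \<Rightarrow> 'a \<Rightarrow> 'a) \<Rightarrow> (real \<Rightarrow> complex) \<Rightarrow> 'a::real_normed_algebra_1 \<Rightarrow> 'a" where
  "cfc scC f a = (THE y. \<forall>P :: nat \<Rightarrow> complex poly.
      uniform_limit {0..1} (\<lambda>n t. poly (P n) (complex_of_real t)) f sequentially \<longrightarrow>
      (\<lambda>n. peval scC (P n) a) \<longlonglongrightarrow> y)"

definition cut_down :: "(complex \<Rightarrow> 'a \<Rightarrow> 'a) \<Rightarrow> real \<Rightarrow> 'a::real_normed_algebra_1 \<Rightarrow> 'a" where
  "cut_down scC \<epsilon> a = cfc scC (\<lambda>t. complex_of_real (max 0 (t - \<epsilon>))) a"

definition dim_fun :: "(complex \<Rightarrow> 'a \<Rightarrow> 'a) \<Rightarrow> ('a \<Rightarrow> complex) \<Rightarrow> 'a::real_normed_algebra_1 \<Rightarrow> real" where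
  "dim_fun scC \<tau> a = lim (\<lambda>n. Re (\<tau> (cfc scC (\<lambda>t. complex_of_real (root n t)) a)))"

end

theory Submission
  imports Defs "HOL-Complex_Analysis.Complex_Analysis"
begin

context unital_cstar_algebra
begin

lemma scC_zero_left[simp]: "scC 0 x = 0"
proof -
  have "scC (0+0) x = scC 0 x + scC 0 x" by (rule scC_add_left)
  then show ?thesis by simp
qed

lemma scC_zero_right[simp]: "scC c 0 = 0"
proof -
  have "scC c (0+0) = scC c 0 + scC c 0" by (rule scC_add_right)
  then show ?thesis by simp
qed

lemma scC_minus_right: "scC c (- x) = - scC c x"
proof -
  have "scC c (x + - x) = scC c x + scC c (-x)" by (rule scC_add_right)
  then show ?thesis by (simp add: eq_neg_iff_add_eq_0 add.commute)
qed

lemma scC_diff_right: "scC c (x - y) = scC c x - scC c y"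
  using scC_add_right[of c x "-y"] scC_minus_right by simp

lemma scC_minus_left: "scC (- c) x = - scC c x"
proof -
  have "scC (c + - c) x = scC c x + scC (-c) x" by (rule scC_add_left)
  then show ?thesis by (simp add: eq_neg_iff_add_eq_0 add.commute)
qed

lemma scC_diff_left: "scC (c - d) x = scC c x - scC d x"
  using scC_add_left[of c "-d" x] scC_minus_left by simp

lemma scC_sum_right: "scC c (sum f A) = (\<Sum>i\<in>A. scC c (f i))"
  by (induction A rule: infinite_finite_induct) (auto simp: scC_add_right)

lemma scC_sum_left: "scC (sum f A) x = (\<Sum>i\<in>A. scC (f i) x)"
  by (induction A rule: infinite_finite_induct) (auto simp: scC_add_left)

lemma scC_real: "scC (of_real r) x = of_real r * x"
  by (simp add: scC_of_real scaleR_conv_of_real)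

lemma scC_one_mult: "scC c 1 * x = scC c x"
  by (simp add: scC_mult_left)

lemma mult_scC_one: "x * scC c 1 = scC c x"
  by (simp add: scC_mult_right)

lemma star_zero[simp]: "star 0 = 0"
proof -
  have "star (0+0) = star 0 + star 0" by (rule star_add)
  then show ?thesis by simp
qed

lemma star_minus: "star (- x) = - star x"
proof -
  have "star (x + - x) = star x + star (-x)" by (rule star_add)
  then show ?thesis by (simp add: eq_neg_iff_add_eq_0 add.commute)
qed

lemma star_diff: "star (x - y) = star x - star y"
  using star_add[of x "-y"] star_minus by simp

lemma star_sum: "star (sum f A) = (\<Sum>i\<in>A. star (f i))"
  by (induction A rule: infinite_finite_induct) (auto simp: star_add)

lemma star_one[simp]: "star 1 = 1"
proof -
  have "star 1 * x = x" for x
    using star_mult[of "star x" 1] by (simp add: star_star)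
  from this[of 1] show ?thesis by simp
qed

lemma star_scaleR: "star (scaleR r x) = scaleR r (star x)"
  using star_scC[of "of_real r" x] by (simp add: scC_of_real)

lemma star_of_real[simp]: "star (of_real r) = of_real r"
  by (simp add: of_real_def star_scaleR)

lemma star_power: "star (x ^ n) = star x ^ n"
proof (induction n)
  case (Suc n)
  have "star (x ^ Suc n) = star (x ^ n) * star x" by (simp add: star_mult power_commutes)
  also have "\<dots> = star x ^ Suc n" using Suc by (simp add: power_commutes)
  finally show ?case .
qed simp

lemma norm_star[simp]: "norm (star x) = norm x"
proof -
  have le: "norm y \<le> norm (star y)" for y
  proof (cases "y = 0")
    case False
    have "(norm y)^2 = norm (star y * y)" by (simp add: cstar_identity)
    also have "\<dots> \<le> norm (star y) * norm y" by (rule norm_mult_ineq)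
    finally have "norm y * norm y \<le> norm (star y) * norm y" by (simp add: power2_eq_square)
    then show ?thesis using False by simp
  qed simp
  show ?thesis using le[of x] le[of "star x"] by (simp add: star_star)
qed

lemma cstar_identity': "norm (x * star x) = (norm x)^2"
  using cstar_identity[of "star x"] by (simp add: star_star)

lemma star_inj: "star x = star y \<longleftrightarrow> x = y"
  by (metis star_star)

lemma bounded_linear_star: "bounded_linear star"
  by (rule bounded_linear_intro[where K=1]) (auto simp: star_add star_scaleR)

lemma isCont_star: "isCont star x"
  by (rule linear_continuous_at[OF bounded_linear_star])

lemma tendsto_star: "(f \<longlongrightarrow> l) F \<Longrightarrow> ((\<lambda>n. star (f n)) \<longlongrightarrow> star l) F"
  by (rule bounded_linear.tendsto[OF bounded_linear_star])

lemma bounded_linear_scC: "bounded_linear (scC c)"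
  by (rule bounded_linear_intro[where K="cmod c"])
     (auto simp: scC_add_right norm_scC scC_assoc scC_of_real[symmetric] mult.commute)

lemma tendsto_scC: "(f \<longlongrightarrow> l) F \<Longrightarrow> ((\<lambda>n. scC c (f n)) \<longlongrightarrow> scC c l) F"
  by (rule bounded_linear.tendsto[OF bounded_linear_scC])

lemma herm_norm_sq: "star h = h \<Longrightarrow> norm (h * h) = (norm h)^2"
  using cstar_identity[of h] by simp

lemma herm_norm_pow2: "star h = h \<Longrightarrow> norm (h ^ (2^k)) = norm h ^ (2^k)"
proof (induction k)
  case (Suc k)
  have hk: "star (h ^ (2^k)) = h ^ (2^k)" using Suc.prems by (simp add: star_power)
  have "h ^ (2 ^ Suc k) = h ^ (2^k) * h ^ (2^k)" by (simp add: power_add[symmetric] mult_2)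
  then have "norm (h ^ (2 ^ Suc k)) = (norm (h ^ (2^k)))^2" using herm_norm_sq[OF hk] by simp
  also have "\<dots> = norm h ^ (2 ^ Suc k)" using Suc by (simp add: power_mult[symmetric] mult.commute)
  finally show ?case .
qed simp

end


context unital_cstar_algebra
begin

lemma peval_upto:
  assumes "degree p \<le> n"
  shows "peval scC p x = (\<Sum>i\<le>n. scC (coeff p i) (x ^ i))"
  unfolding peval_def
  by (rule sum.mono_neutral_left) (use assms in \<open>auto, metis coeff_eq_0 le_trans not_le scC_zero_left\<close>)

lemma peval_pCons: "peval scC (pCons c p) x = scC c 1 + x * peval scC p x"
proof -
  define n where "n = degree p"
  have d: "degree (pCons c p) \<le> Suc n" by (simp add: n_def degree_pCons_le)
  have "peval scC (pCons c p) x = (\<Sum>i\<le>Suc n. scC (coeff (pCons c p) i) (x ^ i))"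
    by (rule peval_upto[OF d])
  also have "\<dots> = scC c 1 + (\<Sum>i\<le>n. scC (coeff p i) (x ^ Suc i))"
    by (subst sum.atMost_Suc_shift) simp
  also have "(\<Sum>i\<le>n. scC (coeff p i) (x ^ Suc i)) = x * peval scC p x"
    by (simp add: peval_upto[of p n] n_def sum_distrib_left scC_mult_right)
  finally show ?thesis .
qed

lemma peval_0[simp]: "peval scC 0 x = 0"
  by (simp add: peval_def)

lemma peval_const[simp]: "peval scC [:c:] x = scC c 1"
  using peval_pCons[of c 0 x] by simp

lemma peval_1[simp]: "peval scC 1 x = 1"
  by (simp add: one_pCons scC_one del: pCons_one)

lemma peval_X[simp]: "peval scC [:0, 1:] x = x"
  by (simp add: peval_pCons scC_one)

lemma peval_add: "peval scC (p + q) x = peval scC p x + peval scC q x"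
proof -
  define n where "n = max (degree p) (degree q)"
  have "degree (p + q) \<le> n" "degree p \<le> n" "degree q \<le> n"
    by (auto simp: n_def degree_add_le)
  then show ?thesis
    by (simp add: peval_upto[of _ n] scC_add_left sum.distrib)
qed

lemma peval_smult: "peval scC (smult c p) x = scC c (peval scC p x)"
proof -
  have "degree (smult c p) \<le> degree p" by simp
  then show ?thesis
    by (simp add: peval_upto[of _ "degree p"] scC_sum_right scC_assoc)
qed

lemma peval_minus: "peval scC (- p) x = - peval scC p x"
  using peval_add[of p "-p" x] by (simp add: eq_neg_iff_add_eq_0 add.commute)

lemma peval_diff: "peval scC (p - q) x = peval scC p x - peval scC q x"
  using peval_add[of p "-q" x] peval_minus by simp

lemma peval_sum: "peval scC (sum f A) x = (\<Sum>i\<in>A. peval scC (f i) x)"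
  by (induction A rule: infinite_finite_induct) (auto simp: peval_add)

lemma peval_mult: "peval scC (p * q) x = peval scC p x * peval scC q x"
proof (induction p rule: pCons_induct)
  case (pCons c p)
  have "pCons c p * q = smult c q + pCons 0 (p * q)" by simp
  then have "peval scC (pCons c p * q) x = scC c (peval scC q x) + x * peval scC (p * q) x"
    by (simp add: peval_add peval_smult peval_pCons)
  also have "\<dots> = (scC c 1 + x * peval scC p x) * peval scC q x"
    using pCons.IH by (simp add: distrib_right scC_one_mult mult.assoc)
  finally show ?case by (simp add: peval_pCons)
qed simp

lemma peval_power: "peval scC (p ^ n) x = peval scC p x ^ n"
  by (induction n) (simp_all add: peval_mult)

lemma peval_monom: "peval scC (monom c n) x = scC c (x ^ n)"
proof -
  have "monom c n = smult c ([:0,1:] ^ n)" by (simp add: monom_altdef)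
  then show ?thesis by (simp add: peval_smult peval_power)
qed

lemma peval_pcompose: "peval scC (pcompose p q) x = peval scC p (peval scC q x)"
  by (induction p rule: pCons_induct)
     (simp_all add: pcompose_pCons peval_add peval_mult peval_pCons scC_one_mult)

lemma peval_of_real_const: "peval scC [:complex_of_real r:] x = of_real r"
  by (simp add: scC_of_real scaleR_conv_of_real)

lemma peval_commute:
  assumes "x * y = y * x"
  shows "peval scC p x * y = y * peval scC p x"
proof (induction p rule: pCons_induct)
  case (pCons c p)
  have "(scC c 1 + x * peval scC p x) * y = y * (scC c 1 + x * peval scC p x)"
    using pCons.IH assms
    by (simp add: distrib_left distrib_right scC_one_mult mult_scC_one mult.assoc)
       (metis mult.assoc)
  then show ?case by (simp add: peval_pCons)
qed simp

lemma peval_commute_self: "peval scC p x * x = x * peval scC p x"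
  by (rule peval_commute) simp

lemma peval_commute2:
  assumes "x * y = y * x"
  shows "peval scC p x * peval scC q y = peval scC q y * peval scC p x"
proof -
  have "peval scC q y * x = x * peval scC q y" by (rule peval_commute) (use assms in simp)
  then show ?thesis using peval_commute[of x "peval scC q y" p] by simp
qed

lemma star_peval: "star (peval scC p x) = peval scC (map_poly cnj p) (star x)"
proof (induction p rule: pCons_induct)
  case (pCons c p)
  have "star (scC c 1 + x * peval scC p x) = scC (cnj c) 1 + star x * star (peval scC p x)"
  proof -
    have "star (x * peval scC p x) = star (peval scC p x * x)"
      by (simp add: peval_commute_self)
    then show ?thesis by (simp add: star_add star_scC star_mult)
  qed
  then show ?case using pCons.IH by (simp add: peval_pCons map_poly_pCons)
qed simp

definition realpoly :: "complex poly \<Rightarrow> bool" where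
  "realpoly p \<longleftrightarrow> (\<forall>i. coeff p i \<in> \<real>)"

lemma realpoly_cnj: "realpoly p \<Longrightarrow> map_poly cnj p = p"
  by (rule poly_eqI) (auto simp: realpoly_def coeff_map_poly Reals_cnj_iff)

lemma herm_peval: "star h = h \<Longrightarrow> realpoly p \<Longrightarrow> star (peval scC p h) = peval scC p h"
  by (simp add: star_peval realpoly_cnj)

lemma realpoly_add: "realpoly p \<Longrightarrow> realpoly q \<Longrightarrow> realpoly (p + q)"
  by (auto simp: realpoly_def)
lemma realpoly_diff: "realpoly p \<Longrightarrow> realpoly q \<Longrightarrow> realpoly (p - q)"
  by (auto simp: realpoly_def)
lemma realpoly_mult: "realpoly p \<Longrightarrow> realpoly q \<Longrightarrow> realpoly (p * q)"
  by (auto simp: realpoly_def coeff_mult intro!: sum_in_Reals)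
lemma realpoly_power: "realpoly p \<Longrightarrow> realpoly (p ^ n)"
proof (induction n)
  case 0
  then show ?case by (auto simp: realpoly_def coeff_1)
next
  case (Suc n)
  then show ?case by (simp add: realpoly_mult)
qed
lemma realpoly_const: "c \<in> \<real> \<Longrightarrow> realpoly [:c:]"
  by (auto simp: realpoly_def coeff_pCons split: nat.split)
lemma realpoly_pCons: "c \<in> \<real> \<Longrightarrow> realpoly p \<Longrightarrow> realpoly (pCons c p)"
  by (auto simp: realpoly_def coeff_pCons split: nat.split)
lemma realpoly_smult: "c \<in> \<real> \<Longrightarrow> realpoly p \<Longrightarrow> realpoly (smult c p)"
  by (auto simp: realpoly_def)
lemma norm_peval_le: "norm (peval scC p x) \<le> (\<Sum>i\<le>degree p. cmod (coeff p i) * norm x ^ i)"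
  unfolding peval_def
  by (rule order.trans[OF norm_sum sum_mono]) (simp add: norm_scC norm_power_ineq mult_left_mono)

end


definition bc :: "nat \<Rightarrow> real" where
  "bc n = ((1/2) gchoose n) * (-1) ^ n"

lemma gchoose_Suc_rec: "(a::real) gchoose (Suc k) = (a gchoose k) * (a - of_nat k) / of_nat (Suc k)"
proof -
  have "fact (Suc k) * (a gchoose Suc k) = (\<Prod>i = 0..<Suc k. a - of_nat i)"
    by (rule gbinomial_mult_fact)
  also have "\<dots> = (\<Prod>i = 0..<k. a - of_nat i) * (a - of_nat k)" by simp
  also have "(\<Prod>i = 0..<k. a - of_nat i) = fact k * (a gchoose k)" by (rule gbinomial_mult_fact[symmetric])
  finally have "fact (Suc k) * (a gchoose Suc k) = fact k * (a gchoose k) * (a - of_nat k)" .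
  then have "of_nat (Suc k) * fact k * (a gchoose Suc k) = fact k * (a gchoose k) * (a - of_nat k)"
    by (simp add: fact_Suc algebra_simps)
  then have "of_nat (Suc k) * (a gchoose Suc k) = (a gchoose k) * (a - of_nat k)"
    by (simp add: mult.assoc mult.left_commute[of "fact k"])
  then show ?thesis by (simp add: field_simps del: of_nat_Suc)
qed

lemma bc_0[simp]: "bc 0 = 1" by (simp add: bc_def)

lemma bc_Suc: "bc (Suc k) = bc k * (real k - 1/2) / real (Suc k)"
  by (simp add: bc_def gchoose_Suc_rec field_simps)

lemma bc_1: "bc 1 = - 1/2" by (simp add: bc_def)
lemma bc_Suc0[simp]: "bc (Suc 0) = - 1/2" by (simp add: bc_def)

lemma bc_nonpos: "n \<ge> 1 \<Longrightarrow> bc n \<le> 0"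
proof (induction n rule: dec_induct)
  case base then show ?case by (simp add: bc_1)
next
  case (step n)
  have "real n - 1/2 \<ge> 0" using step.hyps by simp
  then have "bc n * (real n - 1/2) \<le> 0" using step.IH by (simp add: mult_nonpos_nonneg)
  then show ?case by (simp add: bc_Suc divide_nonpos_pos)
qed

lemma bc_psum: "(\<Sum>k\<le>n. bc k) = - 2 * real (Suc n) * bc (Suc n)"
proof (induction n)
  case 0 then show ?case by (simp add: bc_1)
next
  case (Suc n)
  have "(\<Sum>k\<le>Suc n. bc k) = - 2 * real (Suc n) * bc (Suc n) + bc (Suc n)" using Suc by simp
  also have "\<dots> = - 2 * real (Suc (Suc n)) * bc (Suc (Suc n))"
    by (simp add: bc_Suc[of "Suc n"] field_simps)
  finally show ?case .
qed

lemma bc_psum_nonneg: "(\<Sum>k\<le>n. bc k) \<ge> 0"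
  using bc_nonpos[of "Suc n"] by (simp add: bc_psum mult_nonpos_nonpos)

lemma abs_bc_psum: "(\<Sum>k\<le>n. \<bar>bc k\<bar>) = 2 - (\<Sum>k\<le>n. bc k)"
proof (induction n)
  case (Suc n)
  then show ?case using bc_nonpos[of "Suc n"] by simp
qed simp

lemma abs_bc_psum_le: "(\<Sum>k\<le>n. \<bar>bc k\<bar>) \<le> 2"
  using abs_bc_psum bc_psum_nonneg by simp

lemma summable_abs_bc: "summable (\<lambda>n. \<bar>bc n\<bar>)"
  by (rule bounded_imp_summable[of _ 2]) (auto intro: abs_bc_psum_le)

lemma suminf_abs_bc: "(\<Sum>n. \<bar>bc n\<bar>) \<le> 2"
proof (rule suminf_le_const[OF summable_abs_bc])
  fix n
  show "sum (\<lambda>n. \<bar>bc n\<bar>) {..<n} \<le> 2"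
  proof (cases n)
    case (Suc m)
    then have "{..<n} = {..m}" by auto
    then show ?thesis using abs_bc_psum_le by simp
  qed simp
qed

lemma suminf_abs_bc_tail: "(\<Sum>n. \<bar>bc (Suc n)\<bar>) \<le> 1"
  using suminf_split_head[OF summable_abs_bc] suminf_abs_bc by simp

lemma bc_cauchy: "(\<Sum>i\<le>k. bc i * bc (k - i)) = (if k = 0 then 1 else if k = 1 then -1 else 0)"
proof -
  have "(\<Sum>i\<le>k. bc i * bc (k - i)) = (\<Sum>i=0..k. ((1/2::real) gchoose i) * ((1/2) gchoose (k - i))) * (-1)^k"
    unfolding bc_def sum_distrib_right atMost_atLeast0
  proof (rule sum.cong)
    fix i assume "i \<in> {0..k}"
    then have "(-1::real)^i * (-1)^(k-i) = (-1)^k" by (simp add: power_add[symmetric])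
    then show "(1 / (2::real) gchoose i) * (- 1) ^ i * ((1 / 2 gchoose (k - i)) * (- 1) ^ (k - i)) =
       (1 / 2 gchoose i) * (1 / 2 gchoose (k - i)) * (- 1) ^ k"
      by (metis (no_types, lifting) mult.assoc mult.left_commute)
  qed simp
  also have "\<dots> = ((1::real) gchoose k) * (-1)^k"
    using gbinomial_Vandermonde[of "1/2::real" "1/2" k] by simp
  also have "\<dots> = (if k = 0 then 1 else if k = 1 then -1 else 0)"
  proof -
    have "((1::real) gchoose k) = of_nat (1 choose k)"
      using binomial_gbinomial[of 1 k, where 'a=real] by simp
    then show ?thesis by (cases k) (auto simp: binomial_eq_0)
  qed
  finally show ?thesis .
qed

definition sq :: "'a::{real_normed_algebra_1,banach} \<Rightarrow> 'a" where
  "sq z = (\<Sum>n. bc n *\<^sub>R z ^ n)"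

lemma summable_sq_norm:
  fixes z :: "'a::{real_normed_algebra_1,banach}"
  assumes "norm z \<le> 1"
  shows "summable (\<lambda>n. norm (bc n *\<^sub>R z ^ n))"
proof (rule summable_norm_comparison_test)
  show "\<exists>N. \<forall>n\<ge>N. norm (bc n *\<^sub>R z ^ n) \<le> \<bar>bc n\<bar>"
  proof (intro exI allI impI)
    fix n
    have "norm (z ^ n) \<le> 1"
      by (rule order.trans[OF norm_power_ineq]) (use assms in \<open>simp add: power_le_one\<close>)
    then show "norm (bc n *\<^sub>R z ^ n) \<le> \<bar>bc n\<bar>"
      by (simp add: mult_left_le)
  qed
qed (rule summable_abs_bc)

lemma summable_sq:
  fixes z :: "'a::{real_normed_algebra_1,banach}"
  assumes "norm z \<le> 1"
  shows "summable (\<lambda>n. bc n *\<^sub>R z ^ n)"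
  by (rule summable_norm_cancel[OF summable_sq_norm[OF assms]])

lemma sq_sq:
  fixes z :: "'a::{real_normed_algebra_1,banach}"
  assumes "norm z \<le> 1"
  shows "sq z * sq z = 1 - z"
proof -
  have "sq z * sq z = (\<Sum>k. \<Sum>i\<le>k. (bc i *\<^sub>R z ^ i) * (bc (k - i) *\<^sub>R z ^ (k - i)))"
    unfolding sq_def by (rule Cauchy_product[OF summable_sq_norm[OF assms] summable_sq_norm[OF assms]])
  also have "\<dots> = (\<Sum>k. (\<Sum>i\<le>k. bc i * bc (k - i)) *\<^sub>R z ^ k)"
  proof -
    have "(\<Sum>i\<le>k. (bc i *\<^sub>R z ^ i) * (bc (k - i) *\<^sub>R z ^ (k - i))) = (\<Sum>i\<le>k. bc i * bc (k - i)) *\<^sub>R z ^ k" for k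
      unfolding scaleR_sum_left
      by (rule sum.cong) (auto simp: power_add[symmetric])
    then show ?thesis by simp
  qed
  also have "\<dots> = (\<Sum>k. (if k = 0 then 1 else if k = 1 then -1 else 0) *\<^sub>R z ^ k)"
    by (simp add: bc_cauchy)
  also have "\<dots> = (\<Sum>k\<in>{0,1}. (if k = 0 then 1 else if k = 1 then -1 else 0) *\<^sub>R z ^ k)"
    by (rule suminf_finite) auto
  also have "\<dots> = 1 - z" by simp
  finally show ?thesis .
qed

lemma sq_commute:
  fixes z :: "'a::{real_normed_algebra_1,banach}"
  assumes "norm z \<le> 1" "y * z = z * y"
  shows "y * sq z = sq z * y"
proof -
  have zc: "y * z ^ n = z ^ n * y" for n
    by (induction n) (simp_all add: assms(2) mult.assoc, metis mult.assoc assms(2))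
  have c: "y * (bc n *\<^sub>R z ^ n) = (bc n *\<^sub>R z ^ n) * y" for n
  proof -
    show ?thesis by (simp add: zc)
  qed
  show ?thesis unfolding sq_def
    using suminf_mult[OF summable_sq[OF assms(1)], of y] suminf_mult2[OF summable_sq[OF assms(1)], of y]
    by (simp add: zc)
qed

lemma norm_sq_partial:
  fixes z :: "'a::{real_normed_algebra_1,banach}"
  assumes "norm z \<le> 1"
  shows "norm (sq z - (\<Sum>k<n. bc k *\<^sub>R z ^ k)) \<le> (\<Sum>k. \<bar>bc (k + n)\<bar>)"
proof -
  have s: "summable (\<lambda>k. bc (k + n) *\<^sub>R z ^ (k + n))"
    using summable_sq[OF assms] summable_iff_shift[where f="\<lambda>m. bc m *\<^sub>R z ^ m" and k=n] by simp
  have sn: "summable (\<lambda>k. norm (bc (k + n) *\<^sub>R z ^ (k + n)))"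
    using summable_sq_norm[OF assms] summable_iff_shift[where f="\<lambda>m. norm (bc m *\<^sub>R z ^ m)" and k=n] by simp
  have "sq z - (\<Sum>k<n. bc k *\<^sub>R z ^ k) = (\<Sum>k. bc (k + n) *\<^sub>R z ^ (k + n))"
    unfolding sq_def using suminf_split_initial_segment[OF summable_sq[OF assms], of n] by simp
  also have "norm \<dots> \<le> (\<Sum>k. norm (bc (k + n) *\<^sub>R z ^ (k + n)))"
    by (rule summable_norm[OF sn])
  also have "\<dots> \<le> (\<Sum>k. \<bar>bc (k + n)\<bar>)"
  proof (rule suminf_le[OF _ sn])
    show "summable (\<lambda>k. \<bar>bc (k + n)\<bar>)" using summable_abs_bc summable_iff_shift[where f="\<lambda>m. \<bar>bc m\<bar>" and k=n] by simp
    fix k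
    have "norm (z ^ (k+n)) \<le> 1"
      by (rule order.trans[OF norm_power_ineq]) (use assms in \<open>simp add: power_le_one\<close>)
    then show "norm (bc (k + n) *\<^sub>R z ^ (k + n)) \<le> \<bar>bc (k + n)\<bar>"
      by (simp add: mult_left_le)
  qed
  finally show ?thesis .
qed

lemma bc_tail_tendsto: "(\<lambda>n. \<Sum>k. \<bar>bc (k + n)\<bar>) \<longlonglongrightarrow> 0"
  by (rule suminf_exist_split2[OF summable_abs_bc])

lemma norm_one_minus_sq:
  fixes z :: "'a::{real_normed_algebra_1,banach}"
  assumes "norm z \<le> 1"
  shows "norm (1 - sq z) \<le> 1"
  using norm_sq_partial[OF assms, of 1] suminf_abs_bc_tail by (simp add: norm_minus_commute)

lemma sq_real_nonneg:
  fixes x :: real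
  assumes "\<bar>x\<bar> \<le> 1"
  shows "sq x \<ge> 0"
proof -
  have "norm (1 - sq x) \<le> 1" using norm_one_minus_sq[of x] assms by simp
  then show ?thesis by simp
qed

lemma sq_real:
  fixes x :: real
  assumes "0 \<le> x" "x \<le> 1"
  shows "sq x = sqrt (1 - x)"
proof -
  have "sq x * sq x = 1 - x" using sq_sq[of x] assms by simp
  moreover have "sq x \<ge> 0" using sq_real_nonneg[of x] assms by simp
  ultimately show ?thesis by (metis real_sqrt_abs2 abs_of_nonneg power2_eq_square)
qed


lemma pow2_trick:
  fixes a b C :: real
  assumes a: "0 \<le> a" and b: "0 \<le> b" and h: "\<And>k. a ^ (2^k) \<le> (C * 2^k + 1) * b ^ (2^k)"
  shows "a \<le> b"
proof (rule ccontr)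
  assume "\<not> a \<le> b"
  then have ab: "b < a" by simp
  show False
  proof (cases "b = 0")
    case True
    then show False using h[of 0] ab by simp
  next
    case False
    then have bpos: "b > 0" using b by simp
    define q where "q = a / b"
    have q1: "q > 1" using ab bpos by (simp add: q_def)
    have hq: "q ^ (2^k) \<le> C * 2^k + 1" for k
    proof -
      have "b ^ (2^k) > 0" using bpos by simp
      moreover have "q ^ (2^k) * b ^ (2^k) = a ^ (2^k)"
        using bpos by (simp add: q_def power_divide)
      ultimately show ?thesis using h[of k] by (metis mult_le_cancel_right_pos)
    qed
    define d where "d = q - 1"
    have d: "d > 0" using q1 by (simp add: d_def)
    obtain k where k: "(2 * \<bar>C\<bar> + 1) / d^2 < (2::real) ^ k"
      using real_arch_pow[of 2 "(2 * \<bar>C\<bar> + 1) / d^2"] by auto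
    define M where "M = (2::real)^k"
    have M1: "M \<ge> 1" by (simp add: M_def)
    have kM: "2 * \<bar>C\<bar> + 1 < M * d^2" using k d by (simp add: M_def field_simps)
    have "1 + M * d \<le> q ^ (2^k)"
      using Bernoulli_inequality[of d "2^k"] d by (simp add: d_def M_def)
    then have "(M * d)^2 \<le> (q ^ (2^k))^2"
      using d M1 by (intro power_mono) auto
    also have "\<dots> = q ^ (2 ^ Suc k)" by (simp add: power_mult[symmetric] mult.commute)
    also have "\<dots> \<le> C * 2 ^ Suc k + 1" by (rule hq)
    also have "\<dots> = 2 * C * M + 1" by (simp add: M_def)
    finally have "M^2 * d^2 \<le> 2 * C * M + 1" by (simp add: power_mult_distrib)
    then have A: "M^2 * d^2 \<le> 2 * (C * M) + 1" by simp
    have "M * (2 * \<bar>C\<bar> + 1) < M * (M * d^2)" using kM M1 by simp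
    then have B: "2 * (\<bar>C\<bar> * M) + M < M^2 * d^2" by (simp add: power2_eq_square algebra_simps)
    have Cm: "C * M \<le> \<bar>C\<bar> * M" using M1 by (intro mult_right_mono) auto
    show False using A B Cm M1 by linarith
  qed
qed

lemma higher_deriv_poly: "(deriv ^^ k) (poly p) = poly ((pderiv ^^ k) p)"
proof (induction k)
  case (Suc k)
  show ?case
    by (simp add: Suc) (rule ext, rule DERIV_imp_deriv, simp)
qed simp

lemma coeff_bound_circle:
  fixes Q :: "complex poly"
  assumes "\<And>z. cmod z = 1 \<Longrightarrow> cmod (poly Q z) \<le> B"
  shows "cmod (coeff Q k) \<le> B"
proof -
  have "norm ((deriv ^^ k) (poly Q) 0) \<le> fact k * B / 1 ^ k"
    by (rule Cauchy_inequality) (auto intro: holomorphic_intros continuous_intros assms simp: poly_holomorphic_on)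
  moreover have "(deriv ^^ k) (poly Q) 0 = fact k * coeff Q k"
    by (simp add: higher_deriv_poly poly_0_coeff_0 coeff_higher_pderiv pochhammer_fact)
  ultimately have "fact k * cmod (coeff Q k) \<le> fact k * B"
    by (simp add: norm_mult)
  then show ?thesis by simp
qed

lemma commute_power_mult:
  fixes a b :: "'a::monoid_mult"
  assumes "a * b = b * a"
  shows "(a * b) ^ n = a ^ n * b ^ n"
proof (induction n)
  case (Suc n)
  have bn: "b * a ^ n = a ^ n * b"
    by (induction n) (simp_all, metis assms mult.assoc)
  have "(a * b) ^ Suc n = a * b * (a ^ n * b ^ n)" using Suc by simp
  also have "\<dots> = a * (b * a ^ n) * b ^ n" by (simp add: mult.assoc)
  also have "\<dots> = a ^ Suc n * b ^ Suc n" by (simp add: bn mult.assoc power_commutes)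
  finally show ?case .
qed simp

context unital_cstar_algebra
begin

lemma star_sq:
  assumes "norm z \<le> 1"
  shows "star (sq z) = sq (star z)"
proof -
  have "star (sq z) = (\<Sum>n. star (bc n *\<^sub>R z ^ n))"
    unfolding sq_def by (rule bounded_linear.suminf[OF bounded_linear_star summable_sq[OF assms]])
  then show ?thesis by (simp add: sq_def star_scaleR star_power)
qed

lemma herm_sq: "star z = z \<Longrightarrow> norm z \<le> 1 \<Longrightarrow> star (sq z) = sq z"
  by (simp add: star_sq)

definition iu :: 'a where "iu = scC \<i> 1"

lemma iu_commute: "iu * x = x * iu"
  by (simp add: iu_def scC_one_mult mult_scC_one)

lemma iu_sq: "iu * iu = - 1"
  by (simp add: iu_def scC_one_mult scC_assoc scC_minus_left scC_one)

lemma star_iu: "star iu = - iu"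
  by (simp add: iu_def star_scC scC_minus_left)

lemma norm_pow_le1: "norm (x::'a) \<le> 1 \<Longrightarrow> norm (x ^ n) \<le> 1"
  by (rule order.trans[OF norm_power_ineq]) (simp add: power_le_one)

lemma unitary_mult_norm:
  assumes "star u * u = 1"
  shows "norm (u ^ n * x) = norm x"
proof -
  have un: "norm (u ^ n) \<le> 1"
  proof -
    have "(norm u)^2 = 1" using cstar_identity[of u] assms by simp
    then have "norm u \<le> 1" by (simp add: power2_eq_1_iff abs_le_iff) auto
    then show ?thesis by (rule norm_pow_le1)
  qed
  have sn: "norm (star u ^ n) \<le> 1" using un by (metis norm_star star_power)
  have id: "star u ^ n * u ^ n = 1"
    by (induction n) (simp_all, metis assms mult.assoc mult.left_neutral power_commutes)
  have "norm x = norm (star u ^ n * (u ^ n * x))" by (simp add: mult.assoc[symmetric] id)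
  also have "\<dots> \<le> norm (u ^ n * x)"
    by (rule order.trans[OF norm_mult_ineq]) (use sn in \<open>simp add: mult_left_le_one_le\<close>)
  finally have "norm x \<le> norm (u ^ n * x)" .
  moreover have "norm (u ^ n * x) \<le> norm x"
    by (rule order.trans[OF norm_mult_ineq]) (use un in \<open>simp add: mult_left_le_one_le\<close>)
  ultimately show ?thesis by simp
qed

end


context unital_cstar_algebra
begin
lemma unitary_of_herm:
  assumes hh: "star h = h" and hn: "norm h \<le> 1"
  obtains u where "star u * u = 1" "u * star u = 1" "u * h = h * u" "u * u + 1 = 2 * (u * h)"
    "norm u \<le> 1"
proof -
  define s where "s = sq (h * h)"
  have n2: "norm (h * h) \<le> 1"
    using herm_norm_sq[OF hh] hn by (simp add: power_le_one)
  have sh: "star s = s" unfolding s_def by (rule herm_sq) (use hh n2 in \<open>simp_all add: star_mult\<close>)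
  have ss: "s * s = 1 - h * h" unfolding s_def by (rule sq_sq[OF n2])
  have hs: "h * s = s * h" unfolding s_def by (rule sq_commute[OF n2]) (simp add: mult.assoc)
  define u where "u = h + iu * s"
  have su: "star u = h - iu * s"
  proof -
    have "star u = h + s * (- iu)" by (simp add: u_def star_add star_mult sh hh star_iu)
    also have "s * (- iu) = - (iu * s)" by (simp add: iu_commute)
    finally show ?thesis by simp
  qed
  have L1: "x * (iu * y) = iu * (x * y)" for x y
  proof -
    have "x * (iu * y) = (x * iu) * y" by (simp add: mult.assoc)
    also have "\<dots> = (iu * x) * y" by (simp add: iu_commute)
    finally show ?thesis by (simp add: mult.assoc)
  qed
  have L2: "(iu * x) * y = iu * (x * y)" for x y
    by (simp add: mult.assoc)
  have L3: "(iu * x) * (iu * y) = - (x * y)" for x y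
  proof -
    have "(iu * x) * (iu * y) = iu * (x * (iu * y))" by (rule L2)
    also have "\<dots> = iu * (iu * (x * y))" by (simp only: L1[of x y])
    also have "\<dots> = (iu * iu) * (x * y)" by (simp only: mult.assoc)
    finally show ?thesis by (simp add: iu_sq)
  qed
  have 1: "star u * u = 1"
  proof -
    have "star u * u = h * h + h * (iu * s) - (iu * s) * h - (iu * s) * (iu * s)"
      unfolding su by (simp add: u_def algebra_simps)
    also have "\<dots> = h * h + iu * (h * s) - iu * (s * h) + s * s"
      by (simp only: L1[of h s] L2[of s h] L3[of s s]) simp
    also have "\<dots> = 1" by (simp add: hs ss)
    finally show ?thesis .
  qed
  have 2: "u * star u = 1"
  proof -
    have "u * star u = h * h - h * (iu * s) + (iu * s) * h - (iu * s) * (iu * s)"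
      unfolding su by (simp add: u_def algebra_simps)
    also have "\<dots> = h * h - iu * (h * s) + iu * (s * h) + s * s"
      by (simp only: L1[of h s] L2[of s h] L3[of s s]) simp
    also have "\<dots> = 1" by (simp add: hs ss)
    finally show ?thesis .
  qed
  have 3: "u * h = h * u"
  proof -
    have "u * h = h * h + (iu * s) * h" by (simp add: u_def algebra_simps)
    also have "\<dots> = h * h + h * (iu * s)" by (simp only: L1[of h s] L2[of s h] hs)
    also have "\<dots> = h * u" by (simp add: u_def algebra_simps)
    finally show ?thesis .
  qed
  have 4: "u * u + 1 = 2 * (u * h)"
  proof -
    have "u * u + 1 = u * (u + star u)" using 2 by (simp add: distrib_left)
    also have "u + star u = 2 * h" unfolding su by (simp add: u_def mult_2)
    finally show ?thesis by (simp add: mult_2 mult_2_right distrib_left)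
  qed
  have "(norm u)^2 = 1" using cstar_identity[of u] 1 by simp
  then have 5: "norm u \<le> 1" by (simp add: power2_eq_1_iff abs_le_iff) auto
  show ?thesis by (rule that[OF 1 2 3 4 5])
qed



lemma peval_2X: "peval scC [:0, 2:] x = 2 *\<^sub>R x"
proof -
  have "scC 2 x = 2 *\<^sub>R x" using scC_of_real[of 2 x] by simp
  then show ?thesis by (simp add: peval_pCons mult_scC_one)
qed

lemma peval_1X2: "peval scC [:1, 0, 1:] x = 1 + x * x"
  by (simp add: peval_pCons scC_one)

lemma poly_bound_coeffs:
  "norm (peval scC Q x) \<le> (\<Sum>i\<le>degree Q. cmod (coeff Q i)) " if "norm x \<le> 1"
proof -
  have "norm (peval scC Q x) \<le> (\<Sum>i\<le>degree Q. cmod (coeff Q i) * norm x ^ i)"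
    by (rule norm_peval_le)
  also have "\<dots> \<le> (\<Sum>i\<le>degree Q. cmod (coeff Q i))"
    by (rule sum_mono) (use that in \<open>simp add: mult_left_le power_le_one\<close>)
  finally show ?thesis .
qed

lemma herm_poly_bound0:
  assumes hh: "star h = h" and hn: "norm h \<le> 1"
    and pb: "\<And>t. -1 \<le> t \<Longrightarrow> t \<le> 1 \<Longrightarrow> cmod (poly p (of_real t)) \<le> M"
  shows "norm (peval scC p h) \<le> (2 * real (degree p) + 1) * M"
proof -
  obtain u where u1: "star u * u = 1" and u2: "u * star u = 1" and uh: "u * h = h * u"
    and uu: "u * u + 1 = 2 * (u * h)" and un: "norm u \<le> 1"
    using unitary_of_herm[OF hh hn] by blast
  define d where "d = degree p"
  define c where "c = coeff p"
  define Q where "Q = (\<Sum>n\<le>d. smult (c n) ([:0,2:] ^ (d - n) * [:1,0,1:] ^ n))"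
  define U where "U = 2 *\<^sub>R u"
  have Uh: "U * h = h * U" by (simp add: U_def uh)
  have uu': "1 + u * u = U * h" using uu by (simp add: U_def scaleR_conv_of_real add.commute mult.assoc)
  have M0: "M \<ge> 0" using pb[of 0] by (metis norm_ge_zero order.trans neg_le_0_iff_le zero_le_one)
  have evQ: "peval scC Q u = U ^ d * peval scC p h"
  proof -
    have "peval scC Q u = (\<Sum>n\<le>d. scC (c n) (U ^ (d - n) * (U * h) ^ n))"
      by (simp add: Q_def peval_sum peval_smult peval_mult peval_power peval_2X peval_1X2 U_def uu')
    also have "\<dots> = (\<Sum>n\<le>d. scC (c n) (U ^ d * h ^ n))"
    proof (rule sum.cong)
      fix n assume "n \<in> {..d}"
      then have "U ^ (d - n) * (U * h) ^ n = U ^ d * h ^ n"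
        by (simp add: commute_power_mult[OF Uh] mult.assoc[symmetric] power_add[symmetric])
      then show "scC (c n) (U ^ (d - n) * (U * h) ^ n) = scC (c n) (U ^ d * h ^ n)" by simp
    qed simp
    also have "\<dots> = U ^ d * peval scC p h"
      by (simp add: peval_upto[of p d] d_def c_def sum_distrib_left scC_mult_right)
    finally show ?thesis .
  qed
  have degQ: "degree Q \<le> 2 * d"
    unfolding Q_def
  proof (rule degree_sum_le)
    fix n assume n: "n \<in> {..d}"
    have "degree (smult (c n) ([:0,2::complex:] ^ (d - n) * [:1,0,1::complex:] ^ n)) \<le> degree ([:0,2::complex:] ^ (d - n) * [:1,0,1::complex:] ^ n)"
      by simp
    also have "\<dots> \<le> degree ([:0,2::complex:] ^ (d - n)) + degree ([:1,0,1::complex:] ^ n)" by (rule degree_mult_le)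
    also have "\<dots> \<le> 1 * (d - n) + 2 * n"
      by (intro add_mono order.trans[OF degree_power_le]) auto
    also have "\<dots> \<le> 2 * d" using n by auto
    finally show "degree (smult (c n) ([:0,2::complex:] ^ (d - n) * [:1,0,1::complex:] ^ n)) \<le> 2 * d" .
  qed simp
  have polyQ: "poly Q z = (2 * z) ^ d * poly p (of_real (Re z))" if z: "cmod z = 1" for z
  proof -
    have zc: "z * cnj z = 1" using z complex_norm_square[of z] by simp
    have "1 + z * z = 2 * z * of_real (Re z)"
    proof -
      have "2 * z * of_real (Re z) = z * (z + cnj z)" by (simp add: complex_add_cnj)
      also have "\<dots> = z * z + 1" using zc by (simp add: distrib_left)
      finally show ?thesis by simp
    qed
    have pQ: "poly Q z = (\<Sum>n\<le>d. c n * ((2 * z) ^ (d - n) * (1 + z * z) ^ n))"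
      by (simp add: Q_def poly_sum poly_pCons mult.commute)
    also have "\<dots> = (\<Sum>n\<le>d. (2 * z) ^ d * (c n * of_real (Re z) ^ n))"
    proof (rule sum.cong)
      fix n assume "n \<in> {..d}"
      then have e1: "(2 * z) ^ (d - n) * (2 * z) ^ n = (2 * z) ^ d" by (metis atMost_iff le_add_diff_inverse2 power_add)
      have "(1 + z * z) ^ n = (2 * z) ^ n * of_real (Re z) ^ n"
        by (simp only: \<open>1 + z * z = 2 * z * of_real (Re z)\<close> power_mult_distrib)
      then have "c n * ((2 * z) ^ (d - n) * (1 + z * z) ^ n) = c n * (((2 * z) ^ (d - n) * (2 * z) ^ n) * of_real (Re z) ^ n)"
        by (simp only: mult.assoc)
      also have "\<dots> = (2 * z) ^ d * (c n * of_real (Re z) ^ n)" by (subst e1[symmetric]) (simp add: ac_simps)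
      finally show "c n * ((2 * z) ^ (d - n) * (1 + z * z) ^ n) = (2 * z) ^ d * (c n * of_real (Re z) ^ n)" .
    qed simp
    also have "\<dots> = (2 * z) ^ d * poly p (of_real (Re z))"
      by (simp add: poly_altdef d_def c_def sum_distrib_left)
    finally show ?thesis .
  qed
  have cQ: "cmod (coeff Q i) \<le> 2 ^ d * M" for i
  proof (rule coeff_bound_circle)
    fix z :: complex assume z: "cmod z = 1"
    have "\<bar>Re z\<bar> \<le> 1" using abs_Re_le_cmod[of z] z by simp
    then have "cmod (poly p (of_real (Re z))) \<le> M" using pb by auto
    then show "cmod (poly Q z) \<le> 2 ^ d * M"
      by (simp add: polyQ[OF z] norm_mult norm_power z mult_left_mono)
  qed
  have "norm (peval scC Q u) \<le> (\<Sum>i\<le>degree Q. cmod (coeff Q i))" by (rule poly_bound_coeffs[OF un])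
  also have "\<dots> \<le> (\<Sum>i\<le>degree Q. 2 ^ d * M)" by (rule sum_mono) (rule cQ)
  also have "\<dots> = (real (degree Q) + 1) * (2 ^ d * M)" by simp
  also have "\<dots> \<le> (2 * real d + 1) * (2 ^ d * M)"
    using degQ M0 by (intro mult_right_mono) auto
  finally have A: "norm (peval scC Q u) \<le> (2 * real d + 1) * (2 ^ d * M)" .
  have "norm (peval scC Q u) = 2 ^ d * norm (peval scC p h)"
    by (simp add: evQ U_def unitary_mult_norm[OF u1] mult.assoc[symmetric])
  with A have "2 ^ d * norm (peval scC p h) \<le> 2 ^ d * ((2 * real d + 1) * M)" by (simp add: algebra_simps)
  then show ?thesis by (simp add: d_def)
qed

lemma herm_poly_bound1:
  assumes hh: "star h = h" and hn: "norm h \<le> 1"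
    and pb: "\<And>t. -1 \<le> t \<Longrightarrow> t \<le> 1 \<Longrightarrow> cmod (poly p (of_real t)) \<le> M"
  shows "norm (peval scC p h) \<le> M"
proof -
  have M0: "M \<ge> 0" using pb[of 0] by (metis norm_ge_zero order.trans neg_le_0_iff_le zero_le_one)
  define x where "x = peval scC p h"
  define r where "r = map_poly cnj p * p"
  have y: "star x * x = peval scC r h" by (simp add: x_def r_def star_peval hh peval_mult)
  have yh: "star (star x * x) = star x * x" by (simp add: star_mult star_star)
  have pr: "cmod (poly r (of_real t)) = (cmod (poly p (of_real t)))^2" for t
  proof -
    have "poly (map_poly cnj p) (of_real t) = cnj (poly p (of_real t))"
      using poly_cnj[of p "of_real t"] by simp
    then show ?thesis by (simp add: r_def norm_mult power2_eq_square)
  qed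
  have "norm (star x * x) \<le> M^2"
  proof (rule pow2_trick[where C = "2 * real (degree r)"])
    fix k :: nat
    have "norm (star x * x) ^ (2^k) = norm ((star x * x) ^ (2^k))"
      by (rule herm_norm_pow2[OF yh, symmetric])
    also have "\<dots> = norm (peval scC (r ^ (2^k)) h)" by (simp add: y peval_power)
    also have "\<dots> \<le> (2 * real (degree (r ^ (2^k))) + 1) * (M^2) ^ (2^k)"
    proof (rule herm_poly_bound0[OF hh hn])
      fix t :: real assume "-1 \<le> t" "t \<le> 1"
      then have "cmod (poly p (of_real t)) \<le> M" by (rule pb)
      then have "cmod (poly r (of_real t)) \<le> M^2" by (simp add: pr power_mono)
      then show "cmod (poly (r ^ (2^k)) (of_real t)) \<le> (M^2) ^ (2^k)"
        by (simp add: norm_power power_mono)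
    qed
    also have "\<dots> \<le> (2 * real (degree r) * 2^k + 1) * (M^2) ^ (2^k)"
    proof (rule mult_right_mono)
      have "degree (r ^ (2^k)) \<le> degree r * 2^k" by (rule degree_power_le)
      then have "real (degree (r ^ (2^k))) \<le> real (degree r) * 2^k" by (metis of_nat_le_iff of_nat_mult of_nat_numeral of_nat_power)
      then show "2 * real (degree (r ^ (2^k))) + 1 \<le> 2 * real (degree r) * 2^k + 1" by simp
    qed (use M0 in simp)
    finally show "norm (star x * x) ^ (2^k) \<le> (2 * real (degree r) * 2^k + 1) * (M^2) ^ (2^k)" .
  qed (use M0 in auto)
  then have "(norm x)^2 \<le> M^2" by (simp add: cstar_identity)
  then show ?thesis using M0 by (simp add: x_def power2_le_iff_abs_le)
qed

lemma peval_at_zero: "peval scC p 0 = scC (poly p 0) 1"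
  by (simp add: peval_upto[of p "degree p"] atMost_Suc_eq_insert_0 zero_power poly_0_coeff_0
       sum.atMost_shift del: sum.atMost_Suc)

lemma herm_poly_bound:
  assumes hh: "star h = h"
    and pb: "\<And>t. \<bar>t\<bar> \<le> norm h \<Longrightarrow> cmod (poly p (of_real t)) \<le> M"
  shows "norm (peval scC p h) \<le> M"
proof (cases "h = 0")
  case True
  then show ?thesis using pb[of 0] by (simp add: peval_at_zero norm_scC)
next
  case False
  define \<rho> where "\<rho> = norm h"
  have \<rho>: "\<rho> > 0" using False by (simp add: \<rho>_def)
  define h' where "h' = (1 / \<rho>) *\<^sub>R h"
  have h'h: "star h' = h'" by (simp add: h'_def star_scaleR hh)
  have h'n: "norm h' \<le> 1" using \<rho> by (simp add: h'_def \<rho>_def)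
  define p' where "p' = pcompose p [:0, of_real \<rho>:]"
  have "peval scC p' h' = peval scC p (scC (of_real \<rho>) h')"
    by (simp add: p'_def peval_pcompose peval_pCons mult_scC_one)
  also have "scC (of_real \<rho>) h' = h" using \<rho> by (simp add: scC_of_real h'_def)
  finally have e: "peval scC p' h' = peval scC p h" .
  have "norm (peval scC p' h') \<le> M"
  proof (rule herm_poly_bound1[OF h'h h'n])
    fix t :: real assume "-1 \<le> t" "t \<le> 1"
    then have "\<bar>\<rho> * t\<bar> \<le> norm h" using \<rho> by (simp add: \<rho>_def abs_mult mult_left_le)
    then have "cmod (poly p (of_real (\<rho> * t))) \<le> M" by (rule pb)
    then show "cmod (poly p' (of_real t)) \<le> M" by (simp add: p'_def poly_pcompose mult.commute)
  qed
  then show ?thesis using e by simp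
qed

end

lemma scalar_bump:
  fixes s :: real
  assumes "0 \<le> s" "s \<le> 1"
  shows "real (Suc N) * s ^ N * (1 - s) \<le> 1"
proof -
  have "(\<Sum>i<Suc N. s ^ N) \<le> (\<Sum>i<Suc N. s ^ i)"
    by (rule sum_mono) (use assms in \<open>auto intro: power_decreasing\<close>)
  then have "real (Suc N) * s ^ N \<le> (\<Sum>i<Suc N. s ^ i)" by simp
  then have "real (Suc N) * s ^ N * (1 - s) \<le> (\<Sum>i<Suc N. s ^ i) * (1 - s)"
    by (rule mult_right_mono) (use assms in auto)
  also have "\<dots> = (1 - s) * (\<Sum>i<Suc N. s ^ i)" by (simp add: mult.commute)
  also have "\<dots> = 1 - s ^ Suc N" by (rule one_diff_power_eq[symmetric])
  also have "\<dots> \<le> 1" using assms by simp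
  finally show ?thesis .
qed

lemma abs_le_sq: fixes t r :: real shows "\<bar>t\<bar> \<le> r \<Longrightarrow> t^2 \<le> r^2"
  by (metis abs_ge_zero power2_abs power_mono)

lemma scalar_bump2:
  fixes t \<rho> :: real
  assumes "\<bar>t\<bar> \<le> \<rho>"
  shows "\<bar>t ^ N * (\<rho>^2 - t^2)\<bar> \<le> 2 * \<rho> ^ (N + 2) / real (Suc N)"
proof (cases "\<rho> = 0")
  case True
  then have "t = 0" using assms by simp
  then show ?thesis using True by simp
next
  case False
  then have \<rho>: "\<rho> > 0" using assms by simp
  define s where "s = \<bar>t\<bar> / \<rho>"
  have s0: "0 \<le> s" and s1: "s \<le> 1" using assms \<rho> by (auto simp: s_def)
  have ts: "\<bar>t\<bar> = \<rho> * s" using \<rho> by (simp add: s_def)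
  have t2: "t^2 = \<rho>^2 * s^2" by (metis power2_abs power_mult_distrib ts)
  have "t^2 \<le> \<rho>^2" using assms by (rule abs_le_sq)
  then have "\<bar>t ^ N * (\<rho>^2 - t^2)\<bar> = \<bar>t\<bar> ^ N * (\<rho>^2 - t^2)"
    by (simp add: abs_mult power_abs)
  also have "\<dots> = \<rho> ^ (N + 2) * (s ^ N * (1 - s) * (1 + s))"
  proof -
    have e1: "\<bar>t\<bar> ^ N = \<rho> ^ N * s ^ N" by (simp add: ts power_mult_distrib)
    have "(1 - s) * (1 + s) = 1 - s^2" by (simp add: power2_eq_square algebra_simps)
    then have e2: "\<rho>^2 - t^2 = \<rho>^2 * ((1 - s) * (1 + s))" by (simp add: t2 right_diff_distrib)
    show ?thesis unfolding e1 e2 by (simp add: power_add power2_eq_square mult_ac)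
  qed
  also have "\<dots> \<le> \<rho> ^ (N + 2) * (s ^ N * (1 - s) * 2)"
    using s0 s1 \<rho> by (intro mult_left_mono) (auto intro!: mult_left_mono)
  also have "\<dots> \<le> \<rho> ^ (N + 2) * (2 / real (Suc N))"
  proof (intro mult_left_mono)
    have "s ^ N * (1 - s) \<le> 1 / real (Suc N)"
      using scalar_bump[OF s0 s1, of N] by (simp add: field_simps mult.assoc)
    then show "s ^ N * (1 - s) * 2 \<le> 2 / real (Suc N)" by simp
  qed (use \<rho> in simp)
  finally show ?thesis by (simp add: mult_ac)
qed

context unital_cstar_algebra
begin

definition pos :: "'a \<Rightarrow> bool" where
  "pos a \<longleftrightarrow> star a = a \<and> (\<exists>R\<ge>0. norm (of_real R - a) \<le> R)"

lemma pos_herm: "pos a \<Longrightarrow> star a = a" by (simp add: pos_def)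

lemma pos_sqrt:
  assumes "pos a"
  obtains R k where "R \<ge> 0" "star k = k" "a = R *\<^sub>R (k * k)" "norm a = R * (norm k)^2"
proof -
  from assms obtain R where ah: "star a = a" and R0: "R \<ge> 0" and n: "norm (of_real R - a) \<le> R"
    by (auto simp: pos_def)
  show ?thesis
  proof (cases "R = 0")
    case True
    then have "a = 0" using n by simp
    then show ?thesis by (intro that[of 0 0]) auto
  next
    case False
    then have R: "R > 0" using R0 by simp
    define z where "z = (1 / R) *\<^sub>R (of_real R - a)"
    have "norm z = norm (of_real R - a) / R" using R unfolding z_def norm_scaleR by simp
    then have zn: "norm z \<le> 1" using n R by simp
    have zh: "star z = z" by (simp add: z_def star_scaleR star_diff ah)
    define s where "s = sq z"
    have sh: "star s = s" by (simp add: s_def herm_sq[OF zh zn])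
    have ss: "s * s = 1 - z" by (simp add: s_def sq_sq[OF zn])
    have oR: "(1 / R) *\<^sub>R (of_real R :: 'a) = 1" using R by (simp add: of_real_def)
    have "1 - z = (1 / R) *\<^sub>R a" by (simp add: z_def scaleR_diff_right oR)
    then have a: "a = R *\<^sub>R (s * s)" using R by (simp add: ss)
    have "norm a = R * (norm s)^2" using R by (simp add: a herm_norm_sq[OF sh])
    then show ?thesis using that[OF R0 sh a] by simp
  qed
qed

lemma peval_RX2: "peval scC [:0, 0, complex_of_real R:] k = R *\<^sub>R (k * k)"
  by (simp add: peval_pCons scC_of_real mult_scC_one)

lemma pos_poly_bound:
  assumes "pos a"
    and pb: "\<And>t. 0 \<le> t \<Longrightarrow> t \<le> norm a \<Longrightarrow> cmod (poly q (of_real t)) \<le> M"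
  shows "norm (peval scC q a) \<le> M"
proof -
  obtain R k where R0: "R \<ge> 0" and kh: "star k = k" and a: "a = R *\<^sub>R (k * k)"
    and na: "norm a = R * (norm k)^2"
    using pos_sqrt[OF assms(1)] by blast
  have "peval scC q a = peval scC (pcompose q [:0, 0, complex_of_real R:]) k"
    by (simp add: peval_pcompose peval_RX2 a)
  also have "norm \<dots> \<le> M"
  proof (rule herm_poly_bound[OF kh])
    fix t :: real assume t: "\<bar>t\<bar> \<le> norm k"
    have "t^2 \<le> (norm k)^2" using t by (rule abs_le_sq)
    then have "R * t^2 \<le> norm a" using R0 na by (simp add: mult_left_mono)
    moreover have "0 \<le> R * t^2" using R0 by simp
    ultimately have "cmod (poly q (of_real (R * t^2))) \<le> M" using pb by blast
    then show "cmod (poly (pcompose q [:0, 0, complex_of_real R:]) (of_real t)) \<le> M"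
      by (simp add: poly_pcompose power2_eq_square algebra_simps)
  qed
  finally show ?thesis .
qed

lemma pos_zero[simp]: "pos 0" by (auto simp: pos_def)

lemma pos_add: "pos a \<Longrightarrow> pos b \<Longrightarrow> pos (a + b)"
proof -
  assume "pos a" "pos b"
  then obtain R1 R2 where "star a = a" "star b = b" "R1 \<ge> 0" "R2 \<ge> 0"
    "norm (of_real R1 - a) \<le> R1" "norm (of_real R2 - b) \<le> R2"
    by (auto simp: pos_def)
  moreover have "of_real (R1 + R2) - (a + b) = (of_real R1 - a) + (of_real R2 - b)" by simp
  then have "norm (of_real (R1 + R2) - (a + b)) \<le> norm (of_real R1 - a) + norm (of_real R2 - b)"
    by (metis norm_triangle_ineq)
  ultimately show "pos (a + b)" unfolding pos_def
    by (intro conjI exI[of _ "R1 + R2"]) (auto simp: star_add)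
qed

lemma pos_scaleR: "c \<ge> 0 \<Longrightarrow> pos a \<Longrightarrow> pos (c *\<^sub>R a)"
proof -
  assume c: "c \<ge> 0" and "pos a"
  then obtain R where "star a = a" "R \<ge> 0" "norm (of_real R - a) \<le> R" by (auto simp: pos_def)
  moreover have "of_real (c * R) - c *\<^sub>R a = c *\<^sub>R (of_real R - a)"
    by (simp add: scaleR_diff_right of_real_def)
  ultimately show "pos (c *\<^sub>R a)" unfolding pos_def using c
    by (intro conjI exI[of _ "c * R"]) (auto simp: star_scaleR mult_left_mono)
qed

lemma peval_R_minus_X2: "peval scC [:complex_of_real R, 0, -1:] h = of_real R - h * h"
  by (simp add: peval_pCons scC_of_real scC_minus_left scC_one scaleR_conv_of_real)

lemma pos_herm_sq:
  assumes hh: "star h = h"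
  shows "pos (h * h)"
proof -
  define R where "R = (norm h)^2"
  have "norm (peval scC [:complex_of_real R, 0, -1:] h) \<le> R"
  proof (rule herm_poly_bound[OF hh])
    fix t :: real assume "\<bar>t\<bar> \<le> norm h"
    then have "t^2 \<le> R" unfolding R_def by (rule abs_le_sq)
    have e: "poly [:complex_of_real R, 0, -1:] (of_real t) = of_real (R - t^2)" by (simp add: power2_eq_square)
    have "\<bar>R - t^2\<bar> \<le> R" using \<open>t^2 \<le> R\<close> by (simp add: abs_le_iff)
    then show "cmod (poly [:complex_of_real R, 0, -1:] (of_real t)) \<le> R"
      by (simp only: e norm_of_real)
  qed
  then have "norm (of_real R - h * h) \<le> R" by (simp only: peval_R_minus_X2)
  then show ?thesis unfolding pos_def
    by (auto simp: star_mult hh R_def intro!: exI[of _ R])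
qed

lemma neumann:
  fixes z :: 'a
  assumes "norm z < 1"
  shows "\<exists>g. (1 - z) * g = 1 \<and> g * (1 - z) = 1"
proof -
  have sn: "summable (\<lambda>n. norm (z ^ n))"
    by (rule summable_norm_comparison_test[OF _ summable_geometric[of "norm z"]])
       (use assms in \<open>auto simp: norm_power_ineq\<close>)
  then have s: "summable (\<lambda>n. z ^ n)" by (rule summable_norm_cancel)
  have z0: "(\<lambda>n. z ^ n) \<longlonglongrightarrow> 0" using assms by (rule LIMSEQ_power_zero)
  have tel: "(\<lambda>n. z ^ n - z ^ Suc n) sums 1" using telescope_sums'[OF z0] by simp
  define g where "g = (\<Sum>n. z ^ n)"
  have "(1 - z) * g = (\<Sum>n. (1 - z) * z ^ n)" by (simp add: g_def suminf_mult[OF s])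
  also have "\<dots> = (\<Sum>n. z ^ n - z ^ Suc n)" by (simp add: algebra_simps)
  also have "\<dots> = 1" using tel by (simp add: sums_iff)
  finally have 1: "(1 - z) * g = 1" .
  have "g * (1 - z) = (\<Sum>n. z ^ n * (1 - z))" by (simp add: g_def suminf_mult2[OF s])
  also have "\<dots> = (\<Sum>n. z ^ n - z ^ Suc n)" by (simp add: algebra_simps power_commutes)
  also have "\<dots> = 1" using tel by (simp add: sums_iff)
  finally have 2: "g * (1 - z) = 1" .
  from 1 2 show ?thesis by blast
qed

lemma pos_inv:
  assumes "pos a" "\<mu> > 0"
  shows "\<exists>g. (of_real \<mu> + a) * g = 1 \<and> g * (of_real \<mu> + a) = 1"
proof -
  from assms obtain R where R0: "R \<ge> 0" and n: "norm (of_real R - a) \<le> R" by (auto simp: pos_def)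
  define z where "z = (1 / (\<mu> + R)) *\<^sub>R (of_real R - a)"
  have "norm z \<le> R / (\<mu> + R)" using n R0 assms(2) by (simp add: z_def divide_right_mono)
  also have "\<dots> < 1" using R0 assms(2) by simp
  finally obtain g0 where g0: "(1 - z) * g0 = 1" "g0 * (1 - z) = 1" using neumann by blast
  have zz: "(\<mu> + R) *\<^sub>R z = of_real R - a" using R0 assms(2) by (simp add: z_def)
  have e: "of_real \<mu> + a = (\<mu> + R) *\<^sub>R (1 - z)"
    by (simp add: scaleR_diff_right zz) (simp add: of_real_def scaleR_add_left algebra_simps)
  define g where "g = (1 / (\<mu> + R)) *\<^sub>R g0"
  have "(of_real \<mu> + a) * g = 1" "g * (of_real \<mu> + a) = 1"
    using g0 R0 assms(2) by (simp_all add: e g_def)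
  then show ?thesis by blast
qed

lemma swap_inv:
  fixes x y g :: 'a
  assumes g1: "(1 + x * y) * g = 1" and g2: "g * (1 + x * y) = 1"
  shows "\<exists>h. (1 + y * x) * h = 1 \<and> h * (1 + y * x) = 1"
proof -
  define h where "h = 1 - y * g * x"
  have "(1 + y * x) * h = 1 + y * x - y * ((1 + x * y) * g) * x"
    by (simp add: h_def algebra_simps)
  then have 1: "(1 + y * x) * h = 1" using g1 by simp
  have "h * (1 + y * x) = 1 + y * x - y * (g * (1 + x * y)) * x"
    by (simp add: h_def algebra_simps)
  then have 2: "h * (1 + y * x) = 1" using g2 by simp
  from 1 2 show ?thesis by blast
qed

lemma swap_inv_mu:
  fixes x y g :: 'a
  assumes mu: "\<mu> \<noteq> 0" and g1: "(of_real \<mu> + x * y) * g = 1" and g2: "g * (of_real \<mu> + x * y) = 1"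
  shows "\<exists>h. (of_real \<mu> + y * x) * h = 1 \<and> h * (of_real \<mu> + y * x) = 1"
proof -
  define x' where "x' = (1 / \<mu>) *\<^sub>R x"
  have e: "of_real \<mu> + x * y = \<mu> *\<^sub>R (1 + x' * y)" using mu
    by (simp add: x'_def scaleR_add_right of_real_def)
  have e2: "of_real \<mu> + y * x = \<mu> *\<^sub>R (1 + y * x')" using mu
    by (simp add: x'_def scaleR_add_right of_real_def)
  have "(1 + x' * y) * (\<mu> *\<^sub>R g) = 1" "(\<mu> *\<^sub>R g) * (1 + x' * y) = 1"
    using g1 g2 by (simp_all add: e)
  then obtain h where h: "(1 + y * x') * h = 1" "h * (1 + y * x') = 1"
    using swap_inv by blast
  have "(of_real \<mu> + y * x) * ((1 / \<mu>) *\<^sub>R h) = 1" "((1 / \<mu>) *\<^sub>R h) * (of_real \<mu> + y * x) = 1"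
    using h mu by (simp_all add: e2)
  then show ?thesis by blast
qed

lemma peval_key: fixes w :: 'a shows "peval scC ([:0,1:] ^ N * [:complex_of_real (\<rho>^2), 0, -1:]) w
   = w ^ N * ((of_real \<rho> - w) * (of_real \<rho> + w))"
proof -
  have c: "of_real \<rho> * w = w * of_real \<rho>" by (simp add: of_real_def)
  have "(of_real \<rho> - w) * (of_real \<rho> + w) = of_real (\<rho>^2) - w * w"
    by (simp add: algebra_simps power2_eq_square c)
  then show ?thesis by (simp only: peval_mult peval_power peval_X peval_R_minus_X2)
qed

lemma pos_herm_zero:
  assumes wh: "star w = w" and wp: "pos w"
    and inv: "\<And>\<mu>. \<mu> > 0 \<Longrightarrow> \<exists>g. (of_real \<mu> - w) * g = 1"
  shows "w = 0"
proof (rule ccontr)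
  assume "w \<noteq> 0"
  define \<rho> where "\<rho> = norm w"
  have \<rho>: "\<rho> > 0" using \<open>w \<noteq> 0\<close> by (simp add: \<rho>_def)
  obtain g1 where g1: "(of_real \<rho> + w) * g1 = 1" using pos_inv[OF wp \<rho>] by blast
  obtain g2 where g2: "(of_real \<rho> - w) * g2 = 1" using inv[OF \<rho>] by blast
  define G where "G = norm g1 * norm g2"
  have G0: "G \<ge> 0" by (simp add: G_def)
  have bound: "real (Suc (2^k)) \<le> 2 * \<rho>^2 * G" for k
  proof -
    define N :: nat where "N = 2^k"
    define P where "P = w ^ N * ((of_real \<rho> - w) * (of_real \<rho> + w))"
    have "P * g1 = w ^ N * (of_real \<rho> - w)"
      by (simp add: P_def mult.assoc g1)
    then have wN: "w ^ N = P * g1 * g2" by (simp add: mult.assoc g2)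
    have nP: "norm P \<le> 2 * \<rho> ^ (N + 2) / real (Suc N)"
    proof -
      have "norm (peval scC ([:0,1:] ^ N * [:complex_of_real (\<rho>^2), 0, -1:]) w) \<le> 2 * \<rho> ^ (N + 2) / real (Suc N)"
      proof (rule herm_poly_bound[OF wh])
        fix t :: real assume "\<bar>t\<bar> \<le> norm w"
        then have "\<bar>t ^ N * (\<rho>^2 - t^2)\<bar> \<le> 2 * \<rho> ^ (N + 2) / real (Suc N)"
          by (intro scalar_bump2) (simp add: \<rho>_def)
        moreover have "poly ([:0,1:] ^ N * [:complex_of_real (\<rho>^2), 0, -1:]) (of_real t) = of_real (t ^ N * (\<rho>^2 - t^2))"
          by (simp add: power2_eq_square algebra_simps)
        ultimately show "cmod (poly ([:0,1:] ^ N * [:complex_of_real (\<rho>^2), 0, -1:]) (of_real t)) \<le> 2 * \<rho> ^ (N + 2) / real (Suc N)"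
          by (simp only: norm_of_real)
      qed
      then show ?thesis by (simp only: P_def peval_key)
    qed
    have "\<rho> ^ N = norm (w ^ N)" by (simp add: N_def \<rho>_def herm_norm_pow2[OF wh])
    also have "\<dots> \<le> norm P * G"
    proof -
      have "norm (P * g1 * g2) \<le> norm (P * g1) * norm g2" by (rule norm_mult_ineq)
      also have "\<dots> \<le> norm P * norm g1 * norm g2" by (rule mult_right_mono[OF norm_mult_ineq norm_ge_zero])
      finally show ?thesis by (simp add: wN G_def mult.assoc)
    qed
    also have "\<dots> \<le> 2 * \<rho> ^ (N + 2) / real (Suc N) * G" by (rule mult_right_mono[OF nP G0])
    finally have "\<rho> ^ N \<le> 2 * \<rho> ^ (N + 2) / real (Suc N) * G" .
    then have "\<rho> ^ N * real (Suc N) \<le> \<rho> ^ N * (2 * \<rho>^2 * G)"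
      by (simp add: field_simps power_add power2_eq_square mult_ac)
    then show ?thesis using \<rho> by (simp add: N_def)
  qed
  obtain k where k: "2 * \<rho>^2 * G < (2::real) ^ k" using real_arch_pow[of 2 "2 * \<rho>^2 * G"] by auto
  from bound[of k] k show False by simp
qed

end


context unital_cstar_algebra
begin

lemma iu_left: "x * (iu * y) = iu * (x * y)"
proof -
  have "x * (iu * y) = (x * iu) * y" by (simp add: mult.assoc)
  also have "\<dots> = (iu * x) * y" by (simp add: iu_commute)
  finally show ?thesis by (simp add: mult.assoc)
qed

lemma iu_mult_iu: "(iu * x) * (iu * y) = - (x * y)"
proof -
  have "(iu * x) * (iu * y) = iu * (x * (iu * y))" by (simp add: mult.assoc)
  also have "\<dots> = iu * (iu * (x * y))" by (simp only: iu_left[of x y])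
  also have "\<dots> = (iu * iu) * (x * y)" by (simp only: mult.assoc)
  finally show ?thesis by (simp add: iu_sq)
qed

lemma scC_ofreal_one: "scC (complex_of_real r) 1 = of_real r"
  by (subst scC_of_real) (simp add: of_real_def)

lemma peval_1_minus_X2: "peval scC [:1, 0, -1:] h = 1 - h * h"
  using peval_R_minus_X2[of 1 h] by simp

lemma norm_sq_partial_real:
  fixes t :: real
  assumes "\<bar>t\<bar> \<le> 1"
  shows "\<bar>(\<Sum>k<n. bc k * (1 - t^2) ^ k) - \<bar>t\<bar>\<bar> \<le> (\<Sum>k. \<bar>bc (k + n)\<bar>)"
proof -
  have t2: "t^2 \<le> 1" using abs_le_sq[OF assms] by simp
  have z: "norm (1 - t^2) \<le> 1" using t2 by simp
  have "sq (1 - t^2) = \<bar>t\<bar>" using t2 by (simp add: sq_real)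
  then show ?thesis using norm_sq_partial[OF z, of n] by (simp add: abs_minus_commute)
qed

lemma kaplansky1:
  assumes cn: "norm (star b * b) \<le> 1"
  shows "pos (star b * b)"
proof -
  define c where "c = star b * b"
  have ch: "star c = c" by (simp add: c_def star_mult star_star)
  have cn': "norm c \<le> 1" using cn by (simp add: c_def)
  define z0 where "z0 = 1 - c * c"
  have z0n: "norm z0 \<le> 1"
  proof -
    have "norm (peval scC [:1, 0, -1:] c) \<le> 1"
    proof (rule herm_poly_bound[OF ch])
      fix t :: real assume "\<bar>t\<bar> \<le> norm c"
      then have "t^2 \<le> 1" using abs_le_sq[of t 1] cn' by simp
      moreover have e: "poly [:1, 0, -1:] (complex_of_real t) = complex_of_real (1 - t^2)" by (simp add: power2_eq_square)
      ultimately show "cmod (poly [:1, 0, -1:] (of_real t)) \<le> 1" by (simp only: e norm_of_real) simp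
    qed
    then show ?thesis by (simp add: z0_def peval_1_minus_X2)
  qed
  have z0h: "star z0 = z0" by (simp add: z0_def star_diff star_mult ch)
  define S where "S = sq z0"
  have Sh: "star S = S" by (simp add: S_def herm_sq[OF z0h z0n])
  have SS: "S * S = c * c" unfolding S_def sq_sq[OF z0n] by (simp add: z0_def)
  have Sc: "c * S = S * c" unfolding S_def by (rule sq_commute[OF z0n]) (simp add: z0_def algebra_simps)
  define v where "v = (1/2) *\<^sub>R (S - c)"
  have vh: "star v = v" by (simp add: v_def star_scaleR star_diff Sh ch)
  have cv: "c * v = - (v * v)"
  proof -
    have "v * v = (1/4) *\<^sub>R ((S - c) * (S - c))" by (simp add: v_def)
    also have "(S - c) * (S - c) = 2 *\<^sub>R (c * c - c * S)"
      by (simp add: algebra_simps SS Sc scaleR_2)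
    finally have A: "v * v = (1/2) *\<^sub>R (c * c - c * S)" by simp
    have B: "c * v = (1/2) *\<^sub>R (c * S - c * c)" by (simp add: v_def algebra_simps)
    show ?thesis unfolding A B by (metis minus_diff_eq scaleR_minus_right)
  qed
  have vpos: "pos v"
  proof -
    define tl where "tl n = (\<Sum>k. \<bar>bc (k + n)\<bar>)" for n
    define Pe where "Pe n = (\<Sum>k<n. bc k *\<^sub>R z0 ^ k)" for n
    define vn where "vn n = (1/2) *\<^sub>R (Pe n - c)" for n
    have PeS: "Pe \<longlonglongrightarrow> S" unfolding Pe_def S_def sq_def by (rule summable_LIMSEQ[OF summable_sq[OF z0n]])
    have vnv: "vn \<longlonglongrightarrow> v" unfolding vn_def v_def by (intro tendsto_intros PeS)
    have bnd: "norm (1 - vn n) \<le> 1 + tl n / 2" for n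
    proof -
      define Pp where "Pp = (\<Sum>k<n. smult (complex_of_real (bc k)) ([:1, 0, -1:] ^ k))"
      define Qn where "Qn = 1 - smult (complex_of_real (1/2)) (Pp - [:0, 1:])"
      have ePp: "peval scC Pp c = Pe n"
        by (simp add: Pp_def Pe_def peval_sum peval_smult peval_power peval_1_minus_X2 scC_of_real z0_def)
      have eQn: "peval scC Qn c = 1 - vn n"
        using scC_of_real[of "1/2" "Pe n - c"] by (simp add: Qn_def peval_diff peval_smult ePp vn_def)
      have "norm (peval scC Qn c) \<le> 1 + tl n / 2"
      proof (rule herm_poly_bound[OF ch])
        fix t :: real assume t: "\<bar>t\<bar> \<le> norm c"
        then have t1: "\<bar>t\<bar> \<le> 1" using cn' by simp
        define pr where "pr = (\<Sum>k<n. bc k * (1 - t^2) ^ k)"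
        have ppr: "poly Pp (of_real t) = of_real pr"
          by (simp add: Pp_def pr_def poly_sum power2_eq_square)
        have pq: "poly Qn (of_real t) = of_real (1 - (pr - t) / 2)"
          by (simp add: Qn_def ppr)
        have d: "\<bar>pr - \<bar>t\<bar>\<bar> \<le> tl n" unfolding pr_def tl_def by (rule norm_sq_partial_real[OF t1])
        have d1: "pr \<le> \<bar>t\<bar> + tl n" "\<bar>t\<bar> - tl n \<le> pr" using d by (auto simp: abs_le_iff)
        have "t \<le> \<bar>t\<bar>" "\<bar>t\<bar> \<le> 1" "- 1 \<le> t" using t1 by auto
        then have "\<bar>1 - (pr - t) / 2\<bar> \<le> 1 + tl n / 2"
        proof -
          have "1 - (pr - t) / 2 \<le> 1 + tl n / 2" using d1 \<open>t \<le> \<bar>t\<bar>\<close> by (simp add: field_simps)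
          moreover have "- (1 - (pr - t) / 2) \<le> 1 + tl n / 2"
            using d1 \<open>\<bar>t\<bar> \<le> 1\<close> \<open>- 1 \<le> t\<close> by (simp add: field_simps)
          ultimately show ?thesis by (simp only: abs_le_iff)
        qed
        then show "cmod (poly Qn (of_real t)) \<le> 1 + tl n / 2" by (simp only: pq norm_of_real)
      qed
      then show ?thesis by (simp add: eQn)
    qed
    have tl0: "tl \<longlonglongrightarrow> 0" unfolding tl_def by (rule bc_tail_tendsto)
    have "norm (1 - v) \<le> 1"
    proof (rule LIMSEQ_le)
      show "(\<lambda>n. norm (1 - vn n)) \<longlonglongrightarrow> norm (1 - v)" by (intro tendsto_intros vnv)
      show "(\<lambda>n. 1 + tl n / 2) \<longlonglongrightarrow> 1" using tendsto_add[OF tendsto_const tendsto_divide[OF tl0 tendsto_const]] by simp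
      show "\<exists>N. \<forall>n\<ge>N. norm (1 - vn n) \<le> 1 + tl n / 2" using bnd by blast
    qed
    then show ?thesis unfolding pos_def using vh by (auto intro!: exI[of _ 1])
  qed
  define w where "w = v * (v * v)"
  have wh: "star w = w" by (simp add: w_def star_mult vh mult.assoc)
  have wpos: "pos w"
  proof -
    define r3 where "r3 = (norm v)^3"
    have "norm (peval scC [:complex_of_real r3, 0, 0, -1:] v) \<le> r3"
    proof (rule pos_poly_bound[OF vpos])
      fix t :: real assume t: "0 \<le> t" "t \<le> norm v"
      then have "t^3 \<le> r3" by (simp add: r3_def power_mono)
      moreover have "0 \<le> t^3" using t by simp
      moreover have e: "poly [:complex_of_real r3, 0, 0, -1:] (of_real t) = complex_of_real (r3 - t^3)"
        by (simp add: power3_eq_cube)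
      ultimately show "cmod (poly [:complex_of_real r3, 0, 0, -1:] (of_real t)) \<le> r3"
        by (simp only: e norm_of_real)
    qed
    moreover have "peval scC [:complex_of_real r3, 0, 0, -1:] v = of_real r3 - w"
      by (simp add: peval_pCons scC_ofreal_one scC_minus_left scC_one w_def mult.assoc)
    moreover have "r3 \<ge> 0" by (simp add: r3_def)
    ultimately show ?thesis unfolding pos_def using wh by (auto intro!: exI[of _ r3])
  qed
  define x where "x = b * v"
  have xsx: "star x * x = - w"
  proof -
    have "star x * x = v * (c * v)" by (simp add: x_def c_def star_mult vh mult.assoc)
    then show ?thesis by (simp add: cv w_def)
  qed
  define s2 where "s2 = x + star x"
  define t2 where "t2 = iu * (star x - x)"
  have s2h: "star s2 = s2" by (simp add: s2_def star_add star_star add.commute)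
  have t2h: "star t2 = t2"
  proof -
    have "star t2 = (x - star x) * (- iu)" by (simp add: t2_def star_mult star_diff star_star star_iu)
    also have "\<dots> = iu * (star x - x)" by (simp add: iu_commute algebra_simps)
    finally show ?thesis by (simp add: t2_def)
  qed
  have tt: "t2 * t2 = - ((star x - x) * (star x - x))" by (simp only: t2_def iu_mult_iu)
  have sum2: "s2 * s2 + t2 * t2 = 2 *\<^sub>R (x * star x) + 2 *\<^sub>R (star x * x)"
    by (simp add: tt s2_def algebra_simps scaleR_2)
  have xxs: "x * star x = (1/2) *\<^sub>R (s2 * s2) + (1/2) *\<^sub>R (t2 * t2) + w"
  proof -
    have "(1/2) *\<^sub>R (s2 * s2) + (1/2) *\<^sub>R (t2 * t2) = (1/2) *\<^sub>R (s2 * s2 + t2 * t2)"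
      by (simp add: scaleR_add_right)
    also have "\<dots> = x * star x + star x * x" by (simp add: sum2 scaleR_add_right)
    finally show ?thesis by (simp add: xsx)
  qed
  have xpos: "pos (x * star x)"
    unfolding xxs by (intro pos_add pos_scaleR pos_herm_sq s2h t2h wpos) auto
  have inv: "\<exists>g. (of_real \<mu> - w) * g = 1" if mu: "\<mu> > 0" for \<mu>
  proof -
    obtain g where g: "(of_real \<mu> + x * star x) * g = 1" "g * (of_real \<mu> + x * star x) = 1"
      using pos_inv[OF xpos mu] by blast
    then obtain h where "(of_real \<mu> + star x * x) * h = 1"
      using swap_inv_mu[of \<mu> x "star x" g] mu by auto
    then show ?thesis by (auto simp: xsx)
  qed
  have w0: "w = 0" by (rule pos_herm_zero[OF wh wpos inv])
  have "v ^ (2^2) = v * w" by (simp add: w_def numeral_eq_Suc mult.assoc)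
  then have "norm v ^ (2^2) = 0" using herm_norm_pow2[OF vh, of 2] w0 by simp
  then have "v = 0" by simp
  then have "S = c" by (simp add: v_def)
  moreover have "pos S"
    unfolding pos_def using Sh norm_one_minus_sq[OF z0n] by (auto simp: S_def intro!: exI[of _ 1])
  ultimately show ?thesis by (simp add: c_def)
qed

lemma kaplansky: "pos (star b * b)"
proof (cases "b = 0")
  case True then show ?thesis by simp
next
  case False
  define b' where "b' = (1 / norm b) *\<^sub>R b"
  have "norm (star b' * b') = (norm b')^2" by (rule cstar_identity)
  also have "\<dots> = 1" using False by (simp add: b'_def)
  finally have "pos (star b' * b')" by (intro kaplansky1) simp
  then have "pos ((norm b)^2 *\<^sub>R (star b' * b'))" by (intro pos_scaleR) auto
  moreover have "(norm b)^2 *\<^sub>R (star b' * b') = star b * b"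
    using False by (simp add: b'_def star_scaleR power2_eq_square)
  ultimately show ?thesis by simp
qed

lemma pc_poly_bound:
  assumes "positive_contraction star a"
    and "\<And>t. 0 \<le> t \<Longrightarrow> t \<le> 1 \<Longrightarrow> cmod (poly q (of_real t)) \<le> M"
  shows "norm (peval scC q a) \<le> M"
proof -
  from assms(1) obtain b where a: "a = star b * b" and an: "norm a \<le> 1"
    by (auto simp: positive_contraction_def)
  show ?thesis
  proof (rule pos_poly_bound)
    show "pos a" by (simp add: a kaplansky)
  qed (use assms(2) an in auto)
qed

lemma pc_herm: "positive_contraction star a \<Longrightarrow> star a = a"
  by (auto simp: positive_contraction_def star_mult star_star)

end


lemma real_poly_approx:
  fixes g :: "real \<Rightarrow> real"
  assumes g: "continuous_on {0..1} g" and e: "e > 0"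
  shows "\<exists>p. (\<forall>i. coeff p i \<in> \<real>) \<and> (\<forall>t\<in>{0..1}. cmod (complex_of_real (g t) - poly p (of_real t)) < e)"
proof -
  obtain h where h: "real_polynomial_function h" and he: "\<And>x. x \<in> {0..1} \<Longrightarrow> \<bar>g x - h x\<bar> < e"
    using Stone_Weierstrass_real_polynomial_function[OF compact_Icc g e] by blast
  obtain a n where hs: "h = (\<lambda>x. \<Sum>i\<le>n. a i * x ^ i)"
    using real_polynomial_function_imp_sum[OF h] by blast
  define p where "p = (\<Sum>i\<le>n. monom (complex_of_real (a i)) i)"
  have pp: "poly p (of_real t) = of_real (h t)" for t
    by (simp add: p_def hs poly_sum poly_monom)
  have rp: "coeff p i \<in> \<real>" for i
    by (simp add: p_def coeff_sum coeff_monom)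
  show ?thesis
  proof (intro exI conjI ballI allI)
    fix t :: real assume "t \<in> {0..1}"
    then show "cmod (complex_of_real (g t) - poly p (of_real t)) < e"
      using he by (simp add: pp flip: of_real_diff)
  qed (rule rp)
qed

lemma complex_poly_approx:
  fixes f :: "real \<Rightarrow> complex"
  assumes f: "continuous_on {0..1} f" and e: "e > 0"
  shows "\<exists>p. \<forall>t\<in>{0..1}. cmod (f t - poly p (of_real t)) < e"
proof -
  have "continuous_on {0..1} (\<lambda>t. Re (f t))" "continuous_on {0..1} (\<lambda>t. Im (f t))"
    using f by (auto intro: continuous_intros)
  then obtain p1 p2 where
    p1: "\<forall>t\<in>{0..1}. cmod (complex_of_real (Re (f t)) - poly p1 (of_real t)) < e/2" and
    p2: "\<forall>t\<in>{0..1}. cmod (complex_of_real (Im (f t)) - poly p2 (of_real t)) < e/2"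
    using real_poly_approx[of "\<lambda>t. Re (f t)" "e/2"] real_poly_approx[of "\<lambda>t. Im (f t)" "e/2"] e
    by (meson half_gt_zero)
  define p where "p = p1 + smult \<i> p2"
  show ?thesis
  proof (intro exI ballI)
    fix t :: real assume t: "t \<in> {0..1}"
    have "f t - poly p (of_real t) = (complex_of_real (Re (f t)) - poly p1 (of_real t))
        + \<i> * (complex_of_real (Im (f t)) - poly p2 (of_real t))"
      by (simp add: p_def algebra_simps complex_eq)
    also have "cmod \<dots> \<le> cmod (complex_of_real (Re (f t)) - poly p1 (of_real t))
        + cmod (complex_of_real (Im (f t)) - poly p2 (of_real t))"
      by (rule order.trans[OF norm_triangle_ineq]) (simp add: norm_mult)
    also have "\<dots> < e/2 + e/2" using p1 p2 t by (intro add_strict_mono) auto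
    finally show "cmod (f t - poly p (of_real t)) < e" by simp
  qed
qed

lemma seq_from_approx:
  assumes "\<And>e. e > 0 \<Longrightarrow> \<exists>p. Q p \<and> (\<forall>t\<in>{0..1}. cmod (f t - poly p (of_real t)) < e)"
  shows "\<exists>P. (\<forall>n. Q (P n)) \<and> uniform_limit {0..1::real} (\<lambda>n t. poly (P n) (of_real t)) f sequentially"
proof -
  have "\<forall>n. \<exists>p. Q p \<and> (\<forall>t\<in>{0..1}. cmod (f t - poly p (of_real t)) < 1 / real (Suc n))"
    using assms by simp
  then obtain P where P: "\<And>n. Q (P n)" "\<And>n t. t \<in> {0..1} \<Longrightarrow> cmod (f t - poly (P n) (of_real t)) < 1 / real (Suc n)"
    by metis
  have "uniform_limit {0..1} (\<lambda>n t. poly (P n) (of_real t)) f sequentially"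
  proof (rule uniform_limitI)
    fix e :: real assume e: "e > 0"
    obtain N where N: "1 / real (Suc N) < e" using nat_approx_posE[OF e] by blast
    show "\<forall>\<^sub>F n in sequentially. \<forall>t\<in>{0..1}. dist (poly (P n) (of_real t)) (f t) < e"
      unfolding eventually_sequentially
    proof (intro exI allI impI ballI)
      fix n t assume n: "N \<le> n" and t: "t \<in> {0..1::real}"
      have "1 / real (Suc n) \<le> 1 / real (Suc N)" using n by (simp add: frac_le)
      then show "dist (poly (P n) (of_real t)) (f t) < e"
        using P(2)[OF t, of n] N by (simp add: dist_norm norm_minus_commute)
    qed
  qed
  then show ?thesis using P(1) by blast
qed

lemma poly_seq_complex:
  fixes f :: "real \<Rightarrow> complex"
  assumes "continuous_on {0..1} f"
  shows "\<exists>P. uniform_limit {0..1::real} (\<lambda>n t. poly (P n) (of_real t)) f sequentially"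
  using seq_from_approx[of "\<lambda>_. True" f] complex_poly_approx[OF assms] by auto

lemma poly_seq_real:
  fixes g :: "real \<Rightarrow> real"
  assumes "continuous_on {0..1} g"
  shows "\<exists>P. (\<forall>n i. coeff (P n) i \<in> \<real>) \<and>
    uniform_limit {0..1::real} (\<lambda>n t. poly (P n) (of_real t)) (\<lambda>t. complex_of_real (g t)) sequentially"
  using seq_from_approx[of "\<lambda>p. \<forall>i. coeff p i \<in> \<real>" "\<lambda>t. complex_of_real (g t)"]
    real_poly_approx[OF assms] by auto

lemma bounded_cont01:
  fixes f :: "real \<Rightarrow> complex"
  shows "continuous_on {0..1} f \<Longrightarrow> bounded (f ` {0..1})"
  by (intro compact_imp_bounded compact_continuous_image) auto

context unital_cstar_algebra
begin

definition PC :: "'a \<Rightarrow> bool" where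
  "PC a \<longleftrightarrow> star a = a \<and>
     (\<forall>q M. (\<forall>t\<in>{0..1}. cmod (poly q (complex_of_real t)) \<le> M) \<longrightarrow> norm (peval scC q a) \<le> M)"

lemma PC_bound:
  "PC a \<Longrightarrow> (\<And>t. t \<in> {0..1} \<Longrightarrow> cmod (poly q (complex_of_real t)) \<le> M) \<Longrightarrow> norm (peval scC q a) \<le> M"
  unfolding PC_def by blast

lemma PC_herm: "PC a \<Longrightarrow> star a = a" by (simp add: PC_def)

lemma pc_PC: "positive_contraction star a \<Longrightarrow> PC a"
  unfolding PC_def using pc_herm pc_poly_bound by auto

lemma PC_diff_small:
  assumes a: "PC a"
    and P: "uniform_limit {0..1} (\<lambda>n t. poly (P n) (of_real t)) f sequentially"
    and Q: "uniform_limit {0..1} (\<lambda>n t. poly (Q n) (of_real t)) g sequentially"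
    and fg: "\<And>t. t \<in> {0..1} \<Longrightarrow> cmod (f t - g t) \<le> M"
    and e: "e > 0"
  shows "\<forall>\<^sub>F n in sequentially. norm (peval scC (P n) a - peval scC (Q n) a) \<le> M + e"
proof -
  have "e/2 > 0" using e by simp
  from uniform_limitD[OF P this] uniform_limitD[OF Q this]
  show ?thesis
  proof eventually_elim
    case (elim n)
    have "norm (peval scC (P n - Q n) a) \<le> M + e"
    proof (rule PC_bound[OF a])
      fix t :: real assume t: "t \<in> {0..1}"
      have "cmod (poly (P n) (of_real t) - poly (Q n) (of_real t))
          \<le> cmod (poly (P n) (of_real t) - f t) + cmod (f t - g t) + cmod (g t - poly (Q n) (of_real t))"
      proof -
        have e: "poly (P n) (of_real t) - poly (Q n) (of_real t) =
            (poly (P n) (of_real t) - f t) + (f t - g t) + (g t - poly (Q n) (of_real t))" by simp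
        show ?thesis unfolding e by (rule order.trans[OF norm_triangle_ineq add_right_mono[OF norm_triangle_ineq]])
      qed
      also have "\<dots> \<le> e/2 + M + e/2"
        using elim t fg[OF t] by (intro add_mono) (auto simp: dist_norm norm_minus_commute less_imp_le)
      finally show "cmod (poly (P n - Q n) (of_real t)) \<le> M + e" by simp
    qed
    then show ?case by (simp add: peval_diff)
  qed
qed

lemma PC_null:
  assumes a: "PC a"
    and Q: "uniform_limit {0..1} (\<lambda>n t. poly (Q n) (of_real t)) f sequentially"
    and R: "uniform_limit {0..1} (\<lambda>n t. poly (R n) (of_real t)) f sequentially"
  shows "(\<lambda>n. peval scC (Q n) a - peval scC (R n) a) \<longlonglongrightarrow> 0"
  unfolding tendsto_iff
proof (intro allI impI)
  fix e :: real assume e: "e > 0"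
  have "\<forall>\<^sub>F n in sequentially. norm (peval scC (Q n) a - peval scC (R n) a) \<le> 0 + e/2"
    by (rule PC_diff_small[OF a Q R]) (use e in auto)
  then show "\<forall>\<^sub>F n in sequentially. dist (peval scC (Q n) a - peval scC (R n) a) 0 < e"
    by eventually_elim (use e in auto)
qed

lemma PC_Cauchy:
  assumes a: "PC a"
    and P: "uniform_limit {0..1} (\<lambda>n t. poly (P n) (of_real t)) f sequentially"
  shows "Cauchy (\<lambda>n. peval scC (P n) a)"
proof (rule CauchyI)
  fix e :: real assume e: "e > 0"
  then have "e/3 > 0" by simp
  from uniform_limitD[OF P this] obtain N where N: "\<And>n t. n \<ge> N \<Longrightarrow> t \<in> {0..1} \<Longrightarrow> dist (poly (P n) (of_real t)) (f t) < e/3"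
    unfolding eventually_sequentially by blast
  show "\<exists>M. \<forall>m\<ge>M. \<forall>n\<ge>M. norm (peval scC (P m) a - peval scC (P n) a) < e"
  proof (intro exI allI impI)
    fix m n assume m: "m \<ge> N" and n: "n \<ge> N"
    have "norm (peval scC (P m - P n) a) \<le> 2 * e / 3"
    proof (rule PC_bound[OF a])
      fix t :: real assume t: "t \<in> {0..1}"
      have "cmod (poly (P m) (of_real t) - poly (P n) (of_real t))
          \<le> dist (poly (P m) (of_real t)) (f t) + dist (poly (P n) (of_real t)) (f t)"
      proof -
        have e: "poly (P m) (of_real t) - poly (P n) (of_real t) =
            (poly (P m) (of_real t) - f t) - (poly (P n) (of_real t) - f t)" by simp
        show ?thesis unfolding e dist_norm by (rule norm_triangle_ineq4)
      qed
      also have "\<dots> \<le> e/3 + e/3" using N[OF m t] N[OF n t] by simp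
      finally show "cmod (poly (P m - P n) (of_real t)) \<le> 2 * e / 3" by simp
    qed
    then show "norm (peval scC (P m) a - peval scC (P n) a) < e" using e by (simp add: peval_diff)
  qed
qed

lemma cfc_tendsto:
  assumes a: "PC a"
    and P: "uniform_limit {0..1} (\<lambda>n t. poly (P n) (of_real t)) f sequentially"
  shows "(\<lambda>n. peval scC (P n) a) \<longlonglongrightarrow> cfc scC f a"
proof -
  obtain y where y: "(\<lambda>n. peval scC (P n) a) \<longlonglongrightarrow> y"
  proof -
    have "convergent (\<lambda>n. peval scC (P n) a)" using PC_Cauchy[OF a P] by (simp add: Cauchy_convergent_iff)
    then show ?thesis unfolding convergent_def using that by blast
  qed
  have all: "(\<lambda>n. peval scC (Q n) a) \<longlonglongrightarrow> y"
    if Q: "uniform_limit {0..1} (\<lambda>n t. poly (Q n) (of_real t)) f sequentially" for Q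
  proof -
    have "(\<lambda>n. (peval scC (Q n) a - peval scC (P n) a) + peval scC (P n) a) \<longlonglongrightarrow> 0 + y"
      by (intro tendsto_add PC_null[OF a Q P] y)
    then show ?thesis by simp
  qed
  have cy: "cfc scC f a = y"
    unfolding cfc_def
  proof (rule the_equality)
    show "\<forall>Q. uniform_limit {0..1} (\<lambda>n t. poly (Q n) (of_real t)) f sequentially \<longrightarrow>
        (\<lambda>n. peval scC (Q n) a) \<longlonglongrightarrow> y" by (intro allI impI all)
    fix y' assume H: "\<forall>Q. uniform_limit {0..1} (\<lambda>n t. poly (Q n) (of_real t)) f sequentially \<longrightarrow>
        (\<lambda>n. peval scC (Q n) a) \<longlonglongrightarrow> y'"
    have "(\<lambda>n. peval scC (P n) a) \<longlonglongrightarrow> y'" by (rule H[rule_format, OF P])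
    then show "y' = y" using y by (rule LIMSEQ_unique)
  qed
  show ?thesis unfolding cy by (rule y)
qed

lemma cfc_poly: "PC a \<Longrightarrow> cfc scC (\<lambda>t. poly p (of_real t)) a = peval scC p a"
  using cfc_tendsto[of a "\<lambda>n. p" "\<lambda>t. poly p (of_real t)"]
  by (simp add: uniform_limit_const LIMSEQ_const_iff)

lemma cfc_const: "PC a \<Longrightarrow> cfc scC (\<lambda>t. c) a = scC c 1"
  using cfc_poly[of a "[:c:]"] by simp

lemma cfc_cong:
  assumes "\<And>t. t \<in> {0..1} \<Longrightarrow> f t = g t"
  shows "cfc scC f a = cfc scC g a"
proof -
  have "uniform_limit {0..1} (\<lambda>n t. poly (P n) (of_real t)) f sequentially \<longleftrightarrow>
        uniform_limit {0..1} (\<lambda>n t. poly (P n) (of_real t)) g sequentially" for P :: "nat \<Rightarrow> complex poly"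
    by (rule uniform_limit_cong') (use assms in auto)
  then show ?thesis unfolding cfc_def by simp
qed

lemma cfc_norm_le:
  assumes a: "PC a" and f: "continuous_on {0..1} f" and g: "continuous_on {0..1} g"
    and fg: "\<And>t. t \<in> {0..1} \<Longrightarrow> cmod (f t - g t) \<le> M"
  shows "norm (cfc scC f a - cfc scC g a) \<le> M"
proof -
  obtain P where P: "uniform_limit {0..1} (\<lambda>n t. poly (P n) (of_real t)) f sequentially"
    using poly_seq_complex[OF f] by blast
  obtain Q where Q: "uniform_limit {0..1} (\<lambda>n t. poly (Q n) (of_real t)) g sequentially"
    using poly_seq_complex[OF g] by blast
  have lim: "(\<lambda>n. norm (peval scC (P n) a - peval scC (Q n) a)) \<longlonglongrightarrow> norm (cfc scC f a - cfc scC g a)"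
    by (intro tendsto_intros cfc_tendsto[OF a P] cfc_tendsto[OF a Q])
  show ?thesis
  proof (rule field_le_epsilon)
    fix e :: real assume e: "e > 0"
    have ev: "\<forall>\<^sub>F n in sequentially. norm (peval scC (P n) a - peval scC (Q n) a) \<le> M + e"
      by (rule PC_diff_small[OF a P Q]) (use fg e in auto)
    show "norm (cfc scC f a - cfc scC g a) \<le> M + e"
      by (rule tendsto_upperbound[OF lim ev]) simp
  qed
qed

lemma cfc_add:
  assumes a: "PC a" and f: "continuous_on {0..1} f" and g: "continuous_on {0..1} g"
  shows "cfc scC (\<lambda>t. f t + g t) a = cfc scC f a + cfc scC g a"
proof -
  obtain P where P: "uniform_limit {0..1} (\<lambda>n t. poly (P n) (of_real t)) f sequentially"
    using poly_seq_complex[OF f] by blast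
  obtain Q where Q: "uniform_limit {0..1} (\<lambda>n t. poly (Q n) (of_real t)) g sequentially"
    using poly_seq_complex[OF g] by blast
  have PQ: "uniform_limit {0..1} (\<lambda>n t. poly (P n + Q n) (of_real t)) (\<lambda>t. f t + g t) sequentially"
    using uniform_limit_add[OF P Q] by simp
  have "(\<lambda>n. peval scC (P n + Q n) a) \<longlonglongrightarrow> cfc scC (\<lambda>t. f t + g t) a" by (rule cfc_tendsto[OF a PQ])
  moreover have "(\<lambda>n. peval scC (P n + Q n) a) \<longlonglongrightarrow> cfc scC f a + cfc scC g a"
    unfolding peval_add by (intro tendsto_add cfc_tendsto[OF a P] cfc_tendsto[OF a Q])
  ultimately show ?thesis by (rule LIMSEQ_unique)
qed

lemma cfc_mult:
  assumes a: "PC a" and f: "continuous_on {0..1} f" and g: "continuous_on {0..1} g"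
  shows "cfc scC (\<lambda>t. f t * g t) a = cfc scC f a * cfc scC g a"
proof -
  obtain P where P: "uniform_limit {0..1} (\<lambda>n t. poly (P n) (of_real t)) f sequentially"
    using poly_seq_complex[OF f] by blast
  obtain Q where Q: "uniform_limit {0..1} (\<lambda>n t. poly (Q n) (of_real t)) g sequentially"
    using poly_seq_complex[OF g] by blast
  have PQ: "uniform_limit {0..1} (\<lambda>n t. poly (P n * Q n) (of_real t)) (\<lambda>t. f t * g t) sequentially"
    using uniform_lim_mult[OF P Q bounded_cont01[OF f] bounded_cont01[OF g]] by simp
  have "(\<lambda>n. peval scC (P n * Q n) a) \<longlonglongrightarrow> cfc scC (\<lambda>t. f t * g t) a" by (rule cfc_tendsto[OF a PQ])
  moreover have "(\<lambda>n. peval scC (P n * Q n) a) \<longlonglongrightarrow> cfc scC f a * cfc scC g a"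
    unfolding peval_mult by (intro tendsto_mult cfc_tendsto[OF a P] cfc_tendsto[OF a Q])
  ultimately show ?thesis by (rule LIMSEQ_unique)
qed

lemma cfc_scale:
  assumes a: "PC a" and f: "continuous_on {0..1} f"
  shows "cfc scC (\<lambda>t. c * f t) a = scC c (cfc scC f a)"
proof -
  have "cfc scC (\<lambda>t. c * f t) a = cfc scC (\<lambda>t. c) a * cfc scC f a"
    by (rule cfc_mult[OF a _ f]) (rule continuous_on_const)
  then show ?thesis by (simp add: cfc_const[OF a] scC_one_mult)
qed

lemma cfc_cnj:
  assumes a: "PC a" and f: "continuous_on {0..1} f"
  shows "cfc scC (\<lambda>t. cnj (f t)) a = star (cfc scC f a)"
proof -
  obtain P where P: "uniform_limit {0..1} (\<lambda>n t. poly (P n) (of_real t)) f sequentially"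
    using poly_seq_complex[OF f] by blast
  have P': "uniform_limit {0..1} (\<lambda>n t. poly (map_poly cnj (P n)) (of_real t)) (\<lambda>t. cnj (f t)) sequentially"
  proof -
    have "uniform_limit {0..1} (\<lambda>n t. cnj (poly (P n) (of_real t))) (\<lambda>t. cnj (f t)) sequentially"
      by (rule bounded_linear.uniform_limit[OF bounded_linear_cnj P])
    moreover have ce: "cnj (poly (P n) (of_real t)) = poly (map_poly cnj (P n)) (of_real t)" for n t
      by (simp only: poly_cnj complex_cnj_complex_of_real)
    ultimately show ?thesis by (simp only: ce)
  qed
  have "(\<lambda>n. peval scC (map_poly cnj (P n)) a) \<longlonglongrightarrow> cfc scC (\<lambda>t. cnj (f t)) a" by (rule cfc_tendsto[OF a P'])
  moreover have "(\<lambda>n. peval scC (map_poly cnj (P n)) a) \<longlonglongrightarrow> star (cfc scC f a)"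
  proof -
    have "(\<lambda>n. star (peval scC (P n) a)) \<longlonglongrightarrow> star (cfc scC f a)" by (intro tendsto_star cfc_tendsto[OF a P])
    then show ?thesis by (simp add: star_peval PC_herm[OF a])
  qed
  ultimately show ?thesis by (rule LIMSEQ_unique)
qed

lemma cfc_real_herm:
  assumes a: "PC a" and g: "continuous_on {0..1} g"
  shows "star (cfc scC (\<lambda>t. complex_of_real (g t)) a) = cfc scC (\<lambda>t. complex_of_real (g t)) a"
  using cfc_cnj[OF a, of "\<lambda>t. complex_of_real (g t)"] g by (auto intro: continuous_intros)

lemma cfc_zero: "PC a \<Longrightarrow> cfc scC (\<lambda>t. 0) a = 0"
  using cfc_const[of a 0] by simp

lemma peval_cfc:
  assumes a: "PC a" and h: "continuous_on {0..1} h"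
  shows "peval scC q (cfc scC h a) = cfc scC (\<lambda>t. poly q (h t)) a"
proof (induction q rule: pCons_induct)
  case 0
  then show ?case using cfc_zero[OF a] by simp
next
  case (pCons c q)
  have cq: "continuous_on {0..1} (\<lambda>t. poly q (h t))"
    by (rule continuous_on_compose2[OF _ h, of UNIV]) (auto intro: continuous_intros)
  have "cfc scC (\<lambda>t. poly (pCons c q) (h t)) a = cfc scC (\<lambda>t. c + h t * poly q (h t)) a" by simp
  also have "\<dots> = cfc scC (\<lambda>t. c) a + cfc scC (\<lambda>t. h t * poly q (h t)) a"
    by (rule cfc_add[OF a]) (auto intro: continuous_intros h cq)
  also have "\<dots> = scC c 1 + cfc scC h a * cfc scC (\<lambda>t. poly q (h t)) a"
    by (simp add: cfc_const[OF a] cfc_mult[OF a h cq])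
  finally show ?case by (simp add: peval_pCons pCons.IH)
qed

lemma PC_cfc:
  fixes g :: "real \<Rightarrow> real"
  assumes a: "PC a" and g: "continuous_on {0..1} g" and g01: "\<And>t. t \<in> {0..1} \<Longrightarrow> g t \<in> {0..1}"
  shows "PC (cfc scC (\<lambda>t. complex_of_real (g t)) a)"
  unfolding PC_def
proof (intro conjI allI impI)
  show "star (cfc scC (\<lambda>t. complex_of_real (g t)) a) = cfc scC (\<lambda>t. complex_of_real (g t)) a"
    by (rule cfc_real_herm[OF a g])
  fix q M assume qM: "\<forall>t\<in>{0..1}. cmod (poly q (complex_of_real t)) \<le> M"
  have gc: "continuous_on {0..1} (\<lambda>t. complex_of_real (g t))" using g by (auto intro: continuous_intros)
  have cq: "continuous_on {0..1} (\<lambda>t. poly q (complex_of_real (g t)))"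
    by (rule continuous_on_compose2[OF _ gc, of UNIV]) (auto intro: continuous_intros)
  have e1: "peval scC q (cfc scC (\<lambda>t. complex_of_real (g t)) a) = cfc scC (\<lambda>t. poly q (complex_of_real (g t))) a"
    by (rule peval_cfc[OF a gc])
  have "norm (cfc scC (\<lambda>t. poly q (complex_of_real (g t))) a - cfc scC (\<lambda>t. 0) a) \<le> M"
    by (rule cfc_norm_le[OF a cq continuous_on_const]) (use qM g01 in auto)
  then show "norm (peval scC q (cfc scC (\<lambda>t. complex_of_real (g t)) a)) \<le> M"
    by (simp add: e1 cfc_zero[OF a])
qed

lemma cfc_compose:
  fixes g :: "real \<Rightarrow> real"
  assumes a: "PC a" and g: "continuous_on {0..1} g" and g01: "\<And>t. t \<in> {0..1} \<Longrightarrow> g t \<in> {0..1}"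
    and F: "continuous_on {0..1} F"
  shows "cfc scC F (cfc scC (\<lambda>t. complex_of_real (g t)) a) = cfc scC (\<lambda>t. F (g t)) a"
proof -
  define b where "b = cfc scC (\<lambda>t. complex_of_real (g t)) a"
  have bPC: "PC b" unfolding b_def by (rule PC_cfc[OF a g g01])
  have gc: "continuous_on {0..1} (\<lambda>t. complex_of_real (g t))" using g by (auto intro: continuous_intros)
  have Fg: "continuous_on {0..1} (\<lambda>t. F (g t))"
    by (rule continuous_on_compose2[OF F g]) (use g01 in auto)
  obtain P where P: "uniform_limit {0..1} (\<lambda>n t. poly (P n) (of_real t)) F sequentially"
    using poly_seq_complex[OF F] by blast
  have 1: "(\<lambda>n. peval scC (P n) b) \<longlonglongrightarrow> cfc scC F b" by (rule cfc_tendsto[OF bPC P])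
  have e: "peval scC (P n) b = cfc scC (\<lambda>t. poly (P n) (of_real (g t))) a" for n
    unfolding b_def by (rule peval_cfc[OF a gc])
  have 2: "(\<lambda>n. peval scC (P n) b) \<longlonglongrightarrow> cfc scC (\<lambda>t. F (g t)) a"
    unfolding tendsto_iff e
  proof (intro allI impI)
    fix r :: real assume r: "r > 0"
    then have "r/2 > 0" by simp
    from uniform_limitD[OF P this]
    show "\<forall>\<^sub>F n in sequentially. dist (cfc scC (\<lambda>t. poly (P n) (of_real (g t))) a) (cfc scC (\<lambda>t. F (g t)) a) < r"
    proof eventually_elim
      case (elim n)
      have cq: "continuous_on {0..1} (\<lambda>t. poly (P n) (complex_of_real (g t)))"
        by (rule continuous_on_compose2[OF _ gc, of UNIV]) (auto intro: continuous_intros)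
      have "norm (cfc scC (\<lambda>t. poly (P n) (of_real (g t))) a - cfc scC (\<lambda>t. F (g t)) a) \<le> r/2"
        by (rule cfc_norm_le[OF a cq Fg]) (use elim g01 in \<open>auto simp: dist_norm less_imp_le\<close>)
      then show ?case using r by (simp add: dist_norm)
    qed
  qed
  from 1 2 show ?thesis unfolding b_def by (rule LIMSEQ_unique)
qed

end


context unital_cstar_algebra
begin

context
  fixes \<tau> :: "'a \<Rightarrow> complex"
  assumes tr: "tracial_state star scC \<tau>"
begin

lemma tr_add: "\<tau> (x + y) = \<tau> x + \<tau> y" using tr unfolding tracial_state_def by blast
lemma tr_scC: "\<tau> (scC c x) = c * \<tau> x" using tr unfolding tracial_state_def by blast
lemma tr_one: "\<tau> 1 = 1" using tr unfolding tracial_state_def by blast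
lemma tr_comm: "\<tau> (x * y) = \<tau> (y * x)" using tr unfolding tracial_state_def by blast
lemma tr_pos: "Re (\<tau> (star x * x)) \<ge> 0" using tr unfolding tracial_state_def by blast
lemma tr_pos_im: "Im (\<tau> (star x * x)) = 0" using tr unfolding tracial_state_def by blast

lemma tr_zero: "\<tau> 0 = 0" using tr_scC[of 0 0] by simp
lemma tr_minus: "\<tau> (- x) = - \<tau> x" using tr_add[of x "-x"] tr_zero by (simp add: eq_neg_iff_add_eq_0 add.commute)
lemma tr_diff: "\<tau> (x - y) = \<tau> x - \<tau> y" using tr_add[of x "-y"] tr_minus by simp
lemma tr_scaleR: "\<tau> (r *\<^sub>R x) = of_real r * \<tau> x" using tr_scC[of "of_real r" x] by (simp add: scC_of_real)
lemma tr_of_real: "\<tau> (of_real r) = of_real r" by (simp add: of_real_def tr_scaleR tr_one)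

lemma tr_herm_real:
  assumes "star h = h"
  shows "Im (\<tau> h) = 0"
proof -
  have "star (h + 1) * (h + 1) = star h * h + 2 *\<^sub>R h + 1"
    using assms by (simp add: star_add algebra_simps scaleR_2)
  then have "\<tau> (star (h + 1) * (h + 1)) = \<tau> (star h * h) + 2 * \<tau> h + 1"
    by (simp add: tr_add tr_scaleR tr_one)
  then have "Im (\<tau> (star (h + 1) * (h + 1))) = Im (\<tau> (star h * h)) + 2 * Im (\<tau> h)" by simp
  then show ?thesis using tr_pos_im[of "h + 1"] tr_pos_im[of h] by simp
qed

lemma scC_half_double: "scC (1/2) (x + x) = x"
proof -
  have "scC (1/2) (x + x) = scC (1/2 + 1/2) x" by (simp only: scC_add_right scC_add_left)
  then show ?thesis by (simp add: scC_one)
qed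

lemma tr_star: "\<tau> (star w) = cnj (\<tau> w)"
proof -
  define h where "h = scC (1/2) (w + star w)"
  define k where "k = scC (- \<i> / 2) (w - star w)"
  have hh: "star h = h" by (simp add: h_def star_scC star_add star_star add.commute)
  have kh: "star k = k"
  proof -
    have "star k = scC (\<i>/2) (star w - w)" by (simp add: k_def star_scC star_diff star_star)
    also have "star w - w = - (w - star w)" by simp
    also have "scC (\<i>/2) (- (w - star w)) = scC (- (\<i>/2)) (w - star w)" by (simp only: scC_minus_right scC_minus_left)
    finally show ?thesis by (simp add: k_def)
  qed
  have ik: "scC \<i> k = scC (1/2) (w - star w)" by (simp add: k_def scC_assoc)
  have w: "w = h + scC \<i> k"
  proof -
    have "h + scC \<i> k = scC (1/2) ((w + star w) + (w - star w))" unfolding h_def ik by (simp only: scC_add_right)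
    also have "(w + star w) + (w - star w) = w + w" by simp
    finally show ?thesis by (simp add: scC_half_double)
  qed
  have sw: "star w = h - scC \<i> k"
  proof -
    have "h - scC \<i> k = scC (1/2) ((w + star w) - (w - star w))" unfolding h_def ik by (simp only: scC_diff_right)
    also have "(w + star w) - (w - star w) = star w + star w" by simp
    finally show ?thesis by (simp add: scC_half_double)
  qed
  have rh: "\<tau> h = of_real (Re (\<tau> h))" using tr_herm_real[OF hh] by (simp add: complex_eq_iff)
  have rk: "\<tau> k = of_real (Re (\<tau> k))" using tr_herm_real[OF kh] by (simp add: complex_eq_iff)
  have "\<tau> (star w) = \<tau> h - \<i> * \<tau> k" by (simp add: sw tr_diff tr_scC)
  moreover have "\<tau> w = \<tau> h + \<i> * \<tau> k" by (subst w) (simp add: tr_add tr_scC)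
  moreover have ch: "cnj (\<tau> h) = \<tau> h" using tr_herm_real[OF hh] by (simp add: complex_eq_iff)
  moreover have ck: "cnj (\<tau> k) = \<tau> k" using tr_herm_real[OF kh] by (simp add: complex_eq_iff)
  ultimately show ?thesis by simp
qed

lemma tr_herm_le:
  assumes zh: "star z = z"
  shows "Re (\<tau> z) \<le> norm z"
proof (cases "z = 0")
  case True then show ?thesis by (simp add: tr_zero)
next
  case False
  define r where "r = norm z"
  have r: "r > 0" using False by (simp add: r_def)
  define z' where "z' = (1 / r) *\<^sub>R z"
  have z'h: "star z' = z'" by (simp add: z'_def star_scaleR zh)
  have z'n: "norm z' \<le> 1" using r by (simp add: z'_def r_def)
  define s where "s = sq z'"
  have sh: "star s = s" by (simp add: s_def herm_sq[OF z'h z'n])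
  have ss: "star s * s = 1 - z'" unfolding sh by (simp add: s_def sq_sq[OF z'n])
  have "0 \<le> Re (\<tau> (star s * s))" by (rule tr_pos)
  then have "Re (\<tau> z') \<le> 1" by (simp add: ss tr_diff tr_one)
  then have "Re (\<tau> z') * r \<le> r" using r by simp
  moreover have "\<tau> z = of_real r * \<tau> z'" using r by (simp add: z'_def tr_scaleR)
  ultimately show ?thesis by (simp add: r_def mult.commute)
qed

lemma tr_sandwich:
  assumes ch: "star c = c"
  shows "Re (\<tau> (star y * c * y)) \<le> norm c * Re (\<tau> (star y * y))"
proof (cases "c = 0")
  case True then show ?thesis by (simp add: tr_zero)
next
  case False
  define K where "K = norm c"
  have K: "K > 0" using False by (simp add: K_def)
  define z where "z = (1 / K) *\<^sub>R c"
  have zh: "star z = z" by (simp add: z_def star_scaleR ch)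
  have zn: "norm z \<le> 1" using K by (simp add: z_def K_def)
  define s where "s = sq z"
  have sh: "star s = s" by (simp add: s_def herm_sq[OF zh zn])
  have ss: "s * s = 1 - z" by (simp add: s_def sq_sq[OF zn])
  have "star (s * y) * (s * y) = star y * (s * s) * y" by (simp add: star_mult sh mult.assoc)
  also have "\<dots> = star y * y - (1 / K) *\<^sub>R (star y * c * y)" by (simp add: ss z_def algebra_simps)
  finally have e: "star (s * y) * (s * y) = star y * y - (1 / K) *\<^sub>R (star y * c * y)" .
  have "0 \<le> Re (\<tau> (star (s * y) * (s * y)))" by (rule tr_pos)
  then have "(1 / K) * Re (\<tau> (star y * c * y)) \<le> Re (\<tau> (star y * y))"
    by (simp add: e tr_diff tr_scaleR)
  then show ?thesis using K by (simp add: K_def field_simps)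
qed

lemma norm2_sq: "(norm2 star \<tau> x)^2 = Re (\<tau> (star x * x))"
  unfolding norm2_def using tr_pos[of x] by simp

lemma norm2_nonneg: "norm2 star \<tau> x \<ge> 0"
  unfolding norm2_def using tr_pos[of x] by simp

lemma norm2_le_norm: "norm2 star \<tau> x \<le> norm x"
proof -
  have "Re (\<tau> (star x * x)) \<le> norm (star x * x)"
    by (rule tr_herm_le) (simp add: star_mult star_star)
  then have "(norm2 star \<tau> x)^2 \<le> (norm x)^2" by (simp add: norm2_sq cstar_identity)
  then show ?thesis using norm2_nonneg[of x] by (simp add: power2_le_iff_abs_le)
qed

lemma norm2_mult_left: "norm2 star \<tau> (x * y) \<le> norm x * norm2 star \<tau> y"
proof -
  have "Re (\<tau> (star (x * y) * (x * y))) = Re (\<tau> (star y * (star x * x) * y))"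
    by (simp add: star_mult mult.assoc)
  also have "\<dots> \<le> norm (star x * x) * Re (\<tau> (star y * y))"
    by (rule tr_sandwich) (simp add: star_mult star_star)
  finally have "(norm2 star \<tau> (x * y))^2 \<le> (norm x * norm2 star \<tau> y)^2"
    by (simp add: norm2_sq cstar_identity power_mult_distrib)
  then show ?thesis using norm2_nonneg[of "x * y"] norm2_nonneg[of y]
    by (simp add: power2_le_iff_abs_le)
qed

lemma norm2_star: "norm2 star \<tau> (star x) = norm2 star \<tau> x"
  unfolding norm2_def by (simp add: star_star tr_comm[of x "star x"])

lemma norm2_mult_right: "norm2 star \<tau> (x * y) \<le> norm2 star \<tau> x * norm y"
proof -
  have "norm2 star \<tau> (x * y) = norm2 star \<tau> (star y * star x)"
    by (simp add: norm2_star[of "x * y", symmetric] star_mult)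
  also have "\<dots> \<le> norm (star y) * norm2 star \<tau> (star x)" by (rule norm2_mult_left)
  finally show ?thesis by (simp add: norm2_star mult.commute)
qed

lemma quad_cs:
  fixes A B C :: real
  assumes q: "\<And>l. 0 \<le> A - 2 * l * B + l^2 * C" and A: "A \<ge> 0" and C: "C \<ge> 0"
  shows "B \<le> sqrt A * sqrt C"
proof (cases "C = 0")
  case True
  show ?thesis
  proof (rule ccontr)
    assume "\<not> ?thesis"
    then have B: "B > 0" using True by simp
    have "0 \<le> A - 2 * ((A + 1) / (2 * B)) * B" using q[of "(A + 1) / (2 * B)"] True by simp
    also have "\<dots> = -1" using B by (simp add: field_simps)
    finally show False by simp
  qed
next
  case False
  then have C': "C > 0" using C by simp
  have "0 \<le> A - 2 * (B / C) * B + (B / C)^2 * C" by (rule q)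
  also have "\<dots> = A - B^2 / C" using C' by (simp add: field_simps power2_eq_square)
  finally have "B^2 \<le> A * C" using C' by (simp add: field_simps)
  then have "sqrt (B^2) \<le> sqrt (A * C)" by (rule real_sqrt_le_mono)
  then show ?thesis by (simp add: real_sqrt_mult)
qed

lemma tr_re_cs: "Re (\<tau> (star y * x)) \<le> norm2 star \<tau> x * norm2 star \<tau> y"
proof -
  define A where "A = Re (\<tau> (star x * x))"
  define B where "B = Re (\<tau> (star y * x))"
  define C where "C = Re (\<tau> (star y * y))"
  have B': "Re (\<tau> (star x * y)) = B"
  proof -
    have "\<tau> (star x * y) = \<tau> (star (star y * x))" by (simp add: star_mult star_star)
    then show ?thesis by (simp add: tr_star B_def)
  qed
  have "B \<le> sqrt A * sqrt C"
  proof (rule quad_cs)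
    fix l :: real
    have "star (x - l *\<^sub>R y) * (x - l *\<^sub>R y) = star x * x - l *\<^sub>R (star x * y) - l *\<^sub>R (star y * x) + (l^2) *\<^sub>R (star y * y)"
      by (simp add: star_diff star_scaleR algebra_simps power2_eq_square)
    then have "Re (\<tau> (star (x - l *\<^sub>R y) * (x - l *\<^sub>R y))) = A - 2 * l * B + l^2 * C"
      by (simp add: tr_add tr_diff tr_scaleR A_def C_def B' B_def)
    then show "0 \<le> A - 2 * l * B + l^2 * C" using tr_pos by metis
  qed (use tr_pos A_def C_def in auto)
  then show ?thesis by (simp add: B_def A_def C_def norm2_def)
qed

lemma norm2_triangle: "norm2 star \<tau> (x + y) \<le> norm2 star \<tau> x + norm2 star \<tau> y"
proof -
  have B: "Re (\<tau> (star y * x)) \<le> norm2 star \<tau> x * norm2 star \<tau> y" by (rule tr_re_cs)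
  have B': "Re (\<tau> (star x * y)) \<le> norm2 star \<tau> x * norm2 star \<tau> y"
    using tr_re_cs[of x y] by (simp add: mult.commute)
  have "(norm2 star \<tau> (x + y))^2 = Re (\<tau> (star x * x)) + Re (\<tau> (star y * y)) + Re (\<tau> (star y * x)) + Re (\<tau> (star x * y))"
    by (simp add: norm2_sq star_add algebra_simps tr_add)
  also have "\<dots> \<le> (norm2 star \<tau> x)^2 + (norm2 star \<tau> y)^2 + 2 * (norm2 star \<tau> x * norm2 star \<tau> y)"
    using B B' by (simp add: norm2_sq)
  also have "\<dots> = (norm2 star \<tau> x + norm2 star \<tau> y)^2" by (simp add: power2_eq_square algebra_simps)
  finally show ?thesis using norm2_nonneg[of "x+y"] norm2_nonneg[of x] norm2_nonneg[of y]
    by (simp add: power2_le_iff_abs_le)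
qed

lemma norm2_minus: "norm2 star \<tau> (- x) = norm2 star \<tau> x"
  unfolding norm2_def by (simp add: star_minus)

lemma norm2_diff: "norm2 star \<tau> (x - y) \<le> norm2 star \<tau> x + norm2 star \<tau> y"
  using norm2_triangle[of x "- y"] by (simp add: norm2_minus)

lemma norm2_scC: "norm2 star \<tau> (scC c x) = cmod c * norm2 star \<tau> x"
proof -
  have "star (scC c x) * scC c x = scC (cnj c * c) (star x * x)"
    by (simp add: star_scC scC_mult_left scC_mult_right scC_assoc mult.commute)
  also have "cnj c * c = of_real ((cmod c)^2)" by (simp only: complex_norm_square mult.commute)
  finally have "Re (\<tau> (star (scC c x) * scC c x)) = (cmod c)^2 * Re (\<tau> (star x * x))"
    by (simp add: tr_scC)
  then show ?thesis unfolding norm2_def by (simp add: real_sqrt_mult)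
qed

lemma norm2_one: "norm2 star \<tau> 1 = 1"
  unfolding norm2_def by (simp add: tr_one)

lemma tr_re_le_norm2: "Re (\<tau> x) \<le> norm2 star \<tau> x"
  using tr_re_cs[of 1 x] by (simp add: norm2_one)

lemma norm2_sum: "norm2 star \<tau> (sum f A) \<le> (\<Sum>i\<in>A. norm2 star \<tau> (f i))"
proof (induction A rule: infinite_finite_induct)
  case (insert i A)
  then show ?case
    using norm2_triangle[of "f i" "sum f A"] by simp
qed (simp_all add: norm2_def tr_zero)

end

end


context unital_cstar_algebra
begin

lemma norm2_zero: "tracial_state star scC \<tau> \<Longrightarrow> norm2 star \<tau> 0 = 0"
  by (simp add: norm2_def tr_zero)

lemma pow_diff_norm2:
  assumes tr: "tracial_state star scC \<tau>" and an: "norm a \<le> 1" and bn: "norm b \<le> 1"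
  shows "norm2 star \<tau> (a ^ i - b ^ i) \<le> real i * norm2 star \<tau> (a - b)"
proof (induction i)
  case 0 then show ?case by (simp add: norm2_zero[OF tr])
next
  case (Suc i)
  have e: "a ^ Suc i - b ^ Suc i = a * (a ^ i - b ^ i) + (a - b) * b ^ i"
    by (simp add: algebra_simps)
  have "norm2 star \<tau> (a ^ Suc i - b ^ Suc i) \<le> norm2 star \<tau> (a * (a ^ i - b ^ i)) + norm2 star \<tau> ((a - b) * b ^ i)"
    unfolding e by (rule norm2_triangle[OF tr])
  also have "\<dots> \<le> norm a * norm2 star \<tau> (a ^ i - b ^ i) + norm2 star \<tau> (a - b) * norm (b ^ i)"
    by (intro add_mono norm2_mult_left[OF tr] norm2_mult_right[OF tr])
  also have "\<dots> \<le> 1 * (real i * norm2 star \<tau> (a - b)) + norm2 star \<tau> (a - b) * 1"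
    by (intro add_mono mult_mono Suc.IH an norm_pow_le1 bn mult_left_mono norm2_nonneg[OF tr]) auto
  finally show ?case by (simp add: algebra_simps)
qed

lemma peval_diff_norm2:
  assumes tr: "tracial_state star scC \<tau>" and an: "norm a \<le> 1" and bn: "norm b \<le> 1"
  shows "norm2 star \<tau> (peval scC p a - peval scC p b)
     \<le> (\<Sum>i\<le>degree p. cmod (coeff p i) * real i) * norm2 star \<tau> (a - b)"
proof -
  have "peval scC p a - peval scC p b = (\<Sum>i\<le>degree p. scC (coeff p i) (a ^ i - b ^ i))"
    by (simp add: peval_def sum_subtractf scC_diff_right)
  then have "norm2 star \<tau> (peval scC p a - peval scC p b) \<le> (\<Sum>i\<le>degree p. norm2 star \<tau> (scC (coeff p i) (a ^ i - b ^ i)))"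
    by (simp add: norm2_sum[OF tr])
  also have "\<dots> \<le> (\<Sum>i\<le>degree p. cmod (coeff p i) * (real i * norm2 star \<tau> (a - b)))"
    by (intro sum_mono) (simp add: norm2_scC[OF tr] mult_left_mono pow_diff_norm2[OF tr an bn])
  also have "\<dots> = (\<Sum>i\<le>degree p. cmod (coeff p i) * real i) * norm2 star \<tau> (a - b)"
    by (simp add: sum_distrib_right mult.assoc)
  finally show ?thesis .
qed

lemma pc_norm: "positive_contraction star a \<Longrightarrow> norm a \<le> 1"
  by (simp add: positive_contraction_def)

lemma part1:
  fixes f :: "real \<Rightarrow> complex"
  assumes f: "continuous_on {0..1} f" and \<gamma>: "\<gamma> > 0"
  shows "\<exists>\<delta>>0. \<forall>a b \<tau>. positive_contraction star a \<longrightarrow> positive_contraction star b \<longrightarrow>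
                tracial_state star scC \<tau> \<longrightarrow> norm2 star \<tau> (a - b) < \<delta> \<longrightarrow>
                norm2 star \<tau> (cfc scC f a - cfc scC f b) < \<gamma>"
proof -
  obtain p where p: "\<forall>t\<in>{0..1}. cmod (f t - poly p (of_real t)) < \<gamma>/4"
    using complex_poly_approx[OF f, of "\<gamma>/4"] \<gamma> by auto
  define L where "L = (\<Sum>i\<le>degree p. cmod (coeff p i) * real i)"
  have L0: "L \<ge> 0" by (simp add: L_def sum_nonneg)
  define \<delta> where "\<delta> = \<gamma> / (4 * (L + 1))"
  have \<delta>: "\<delta> > 0" using \<gamma> L0 by (simp add: \<delta>_def)
  have pc: "continuous_on {0..1} (\<lambda>t. poly p (complex_of_real t))" by (auto intro: continuous_intros)
  have approx: "norm (cfc scC f x - peval scC p x) \<le> \<gamma>/4" if x: "PC x" for x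
  proof -
    have "norm (cfc scC f x - cfc scC (\<lambda>t. poly p (complex_of_real t)) x) \<le> \<gamma>/4"
      by (rule cfc_norm_le[OF x f pc]) (use p in \<open>auto intro: less_imp_le\<close>)
    then show ?thesis by (simp add: cfc_poly[OF x])
  qed
  show ?thesis
  proof (intro exI[of _ \<delta>] conjI allI impI \<delta>)
    fix a b \<tau>
    assume a: "positive_contraction star a" and b: "positive_contraction star b"
      and tr: "tracial_state star scC \<tau>" and ab: "norm2 star \<tau> (a - b) < \<delta>"
    have e: "cfc scC f a - cfc scC f b = (cfc scC f a - peval scC p a) + ((peval scC p a - peval scC p b) - (cfc scC f b - peval scC p b))"
      by simp
    have 1: "norm2 star \<tau> (cfc scC f a - peval scC p a) \<le> \<gamma>/4"
      by (rule order.trans[OF norm2_le_norm[OF tr] approx[OF pc_PC[OF a]]])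
    have 2: "norm2 star \<tau> (cfc scC f b - peval scC p b) \<le> \<gamma>/4"
      by (rule order.trans[OF norm2_le_norm[OF tr] approx[OF pc_PC[OF b]]])
    have "norm2 star \<tau> (peval scC p a - peval scC p b) \<le> L * norm2 star \<tau> (a - b)"
      unfolding L_def by (rule peval_diff_norm2[OF tr pc_norm[OF a] pc_norm[OF b]])
    also have "\<dots> \<le> L * \<delta>" using ab L0 by (intro mult_left_mono) auto
    also have "\<dots> \<le> \<gamma>/4" using \<gamma> L0 by (simp add: \<delta>_def field_simps)
    finally have 3: "norm2 star \<tau> (peval scC p a - peval scC p b) \<le> \<gamma>/4" .
    have "norm2 star \<tau> (cfc scC f a - cfc scC f b) \<le> norm2 star \<tau> (cfc scC f a - peval scC p a)
        + (norm2 star \<tau> (peval scC p a - peval scC p b) + norm2 star \<tau> (cfc scC f b - peval scC p b))"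
      unfolding e by (rule order.trans[OF norm2_triangle[OF tr] add_left_mono[OF norm2_diff[OF tr]]])
    also have "\<dots> \<le> \<gamma>/4 + (\<gamma>/4 + \<gamma>/4)" using 1 2 3 by simp
    also have "\<dots> < \<gamma>" using \<gamma> by simp
    finally show "norm2 star \<tau> (cfc scC f a - cfc scC f b) < \<gamma>" .
  qed
qed

lemma cfc_diff:
  assumes a: "PC a" and f: "continuous_on {0..1} f" and g: "continuous_on {0..1} g"
  shows "cfc scC (\<lambda>t. f t - g t) a = cfc scC f a - cfc scC g a"
proof -
  have "cfc scC (\<lambda>t. (f t - g t) + g t) a = cfc scC (\<lambda>t. f t - g t) a + cfc scC g a"
    by (rule cfc_add[OF a _ g]) (auto intro: continuous_intros f g)
  then show ?thesis by simp
qed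

lemma tr_cfc_nonneg:
  fixes F :: "real \<Rightarrow> real"
  assumes tr: "tracial_state star scC \<tau>" and a: "PC a" and F: "continuous_on {0..1} F"
    and F0: "\<And>t. t \<in> {0..1} \<Longrightarrow> F t \<ge> 0"
  shows "Re (\<tau> (cfc scC (\<lambda>t. complex_of_real (F t)) a)) \<ge> 0"
proof -
  define G where "G t = sqrt (F t)" for t
  have G: "continuous_on {0..1} G" unfolding G_def by (auto intro: continuous_intros F)
  have Gc: "continuous_on {0..1} (\<lambda>t. complex_of_real (G t))" by (auto intro: continuous_intros G)
  have "cfc scC (\<lambda>t. complex_of_real (F t)) a = cfc scC (\<lambda>t. complex_of_real (G t) * complex_of_real (G t)) a"
    by (rule cfc_cong) (use F0 in \<open>simp add: G_def flip: of_real_mult\<close>)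
  also have "\<dots> = cfc scC (\<lambda>t. complex_of_real (G t)) a * cfc scC (\<lambda>t. complex_of_real (G t)) a"
    by (rule cfc_mult[OF a Gc Gc])
  also have "\<dots> = star (cfc scC (\<lambda>t. complex_of_real (G t)) a) * cfc scC (\<lambda>t. complex_of_real (G t)) a"
    by (simp add: cfc_real_herm[OF a G])
  finally show ?thesis by (simp add: tr_pos[OF tr])
qed

lemma tr_cfc_mono:
  fixes F F' :: "real \<Rightarrow> real"
  assumes tr: "tracial_state star scC \<tau>" and a: "PC a" and F: "continuous_on {0..1} F"
    and F': "continuous_on {0..1} F'" and le: "\<And>t. t \<in> {0..1} \<Longrightarrow> F t \<le> F' t"
  shows "Re (\<tau> (cfc scC (\<lambda>t. complex_of_real (F t)) a)) \<le> Re (\<tau> (cfc scC (\<lambda>t. complex_of_real (F' t)) a))"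
proof -
  have "Re (\<tau> (cfc scC (\<lambda>t. complex_of_real (F' t - F t)) a)) \<ge> 0"
    by (rule tr_cfc_nonneg[OF tr a]) (use le in \<open>auto intro: continuous_intros F F'\<close>)
  moreover have "cfc scC (\<lambda>t. complex_of_real (F' t - F t)) a =
      cfc scC (\<lambda>t. complex_of_real (F' t)) a - cfc scC (\<lambda>t. complex_of_real (F t)) a"
    unfolding of_real_diff by (rule cfc_diff[OF a]) (auto intro: continuous_intros F F')
  ultimately show ?thesis by (simp add: tr_diff[OF tr])
qed

lemma tr_cfc_const:
  assumes tr: "tracial_state star scC \<tau>" and a: "PC a"
  shows "\<tau> (cfc scC (\<lambda>t. c) a) = c"
  by (simp add: cfc_const[OF a] tr_scC[OF tr] tr_one[OF tr])

lemma dim_fun_lim: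
  assumes tr: "tracial_state star scC \<tau>" and x: "PC x"
  shows "(\<lambda>n. Re (\<tau> (cfc scC (\<lambda>t. complex_of_real (root n t)) x))) \<longlonglongrightarrow> dim_fun scC \<tau> x"
    and "\<And>n. Re (\<tau> (cfc scC (\<lambda>t. complex_of_real (root n t)) x)) \<le> dim_fun scC \<tau> x"
proof -
  define s where "s n = Re (\<tau> (cfc scC (\<lambda>t. complex_of_real (root n t)) x))" for n
  have rc: "continuous_on {0..1} (root n)" for n by (auto intro: continuous_intros)
  have inc: "incseq s"
  proof (rule incseq_SucI)
    fix n
    show "s n \<le> s (Suc n)" unfolding s_def
    proof (rule tr_cfc_mono[OF tr x rc rc])
      fix t :: real assume t: "t \<in> {0..1}"
      show "root n t \<le> root (Suc n) t"
      proof (cases "n = 0")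
        case True then show ?thesis using t by (simp add: real_root_ge_zero)
      next
        case False then show ?thesis using t by (intro real_root_increasing) auto
      qed
    qed
  qed
  have bnd: "s n \<le> 1" for n
  proof -
    have "s n \<le> Re (\<tau> (cfc scC (\<lambda>t. complex_of_real 1) x))" unfolding s_def
    proof (rule tr_cfc_mono[OF tr x rc continuous_on_const])
      fix t :: real assume t: "t \<in> {0..1}"
      show "root n t \<le> 1"
      proof (cases "n = 0")
        case True then show ?thesis by simp
      next
        case False
        then have "root n t \<le> root n 1" using t by simp
        then show ?thesis using False by simp
      qed
    qed
    then show ?thesis by (simp add: tr_cfc_const[OF tr x])
  qed
  obtain L where L: "s \<longlonglongrightarrow> L" "\<forall>i. s i \<le> L" using incseq_convergent[OF inc, of 1] bnd by blast
  have "dim_fun scC \<tau> x = L" unfolding dim_fun_def using L(1) by (simp add: s_def[abs_def] limI)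
  then show "s \<longlonglongrightarrow> dim_fun scC \<tau> x" "\<And>n. s n \<le> dim_fun scC \<tau> x" using L by auto
qed

lemma part2:
  assumes \<gamma>: "\<gamma> > 0" and \<epsilon>: "\<epsilon> > 0"
  shows "\<exists>\<delta>>0. \<forall>a b \<tau>. positive_contraction star a \<longrightarrow> positive_contraction star b \<longrightarrow>
                tracial_state star scC \<tau> \<longrightarrow> norm2 star \<tau> (a - b) < \<delta> \<longrightarrow>
                dim_fun scC \<tau> (cut_down scC \<epsilon> a) < dim_fun scC \<tau> b + \<gamma>"
proof -
  define g where "g t = min 1 (max 0 (2 * t / \<epsilon> - 1))" for t
  have gc: "continuous_on {0..1} g" unfolding g_def using \<epsilon> by (intro continuous_intros) auto
  have gcc: "continuous_on {0..1} (\<lambda>t. complex_of_real (g t))" by (auto intro: continuous_intros gc)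
  have g01: "0 \<le> g t" "g t \<le> 1" for t by (auto simp: g_def)
  obtain \<delta> where \<delta>: "\<delta> > 0" and H: "\<And>a b \<tau>. positive_contraction star a \<Longrightarrow> positive_contraction star b \<Longrightarrow>
                tracial_state star scC \<tau> \<Longrightarrow> norm2 star \<tau> (a - b) < \<delta> \<Longrightarrow>
                norm2 star \<tau> (cfc scC (\<lambda>t. complex_of_real (g t)) a - cfc scC (\<lambda>t. complex_of_real (g t)) b) < \<gamma>/3"
    using part1[OF gcc, of "\<gamma>/3"] \<gamma> by auto
  define h where "h t = max 0 (t - \<epsilon>)" for t
  have hc: "continuous_on {0..1} h" unfolding h_def by (intro continuous_intros)
  have h01: "h t \<in> {0..1}" if "t \<in> {0..1}" for t using that \<epsilon> by (auto simp: h_def)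
  have "(\<lambda>n. root n (\<epsilon>/2)) \<longlonglongrightarrow> 1" using \<epsilon> by (intro LIMSEQ_root_const) simp
  then have "\<forall>\<^sub>F n in sequentially. root n (\<epsilon>/2) > 1 - \<gamma>/3" using \<gamma> by (intro order_tendstoD) auto
  then obtain n0 where n0: "\<And>n. n \<ge> n0 \<Longrightarrow> root n (\<epsilon>/2) > 1 - \<gamma>/3"
    unfolding eventually_sequentially by blast
  define n where "n = Suc n0"
  have n: "n > 0" "root n (\<epsilon>/2) > 1 - \<gamma>/3" using n0[of n] by (auto simp: n_def)
  show ?thesis
  proof (intro exI[of _ \<delta>] conjI allI impI \<delta>)
    fix a b \<tau>
    assume a: "positive_contraction star a" and b: "positive_contraction star b"
      and tr: "tracial_state star scC \<tau>" and ab: "norm2 star \<tau> (a - b) < \<delta>"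
    have aP: "PC a" and bP: "PC b" using a b by (auto intro: pc_PC)
    define a' where "a' = cut_down scC \<epsilon> a"
    have a'e: "a' = cfc scC (\<lambda>t. complex_of_real (h t)) a" by (simp add: a'_def cut_down_def h_def)
    have a'P: "PC a'" unfolding a'e by (rule PC_cfc[OF aP hc h01])
    have s1: "dim_fun scC \<tau> a' \<le> Re (\<tau> (cfc scC (\<lambda>t. complex_of_real (g t)) a))"
    proof (rule tendsto_upperbound[OF dim_fun_lim(1)[OF tr a'P]])
      show "\<forall>\<^sub>F m in sequentially. Re (\<tau> (cfc scC (\<lambda>t. complex_of_real (root m t)) a')) \<le> Re (\<tau> (cfc scC (\<lambda>t. complex_of_real (g t)) a))"
      proof (rule always_eventually, rule allI)
        fix m
        have "cfc scC (\<lambda>t. complex_of_real (root m t)) a' = cfc scC (\<lambda>t. complex_of_real (root m (h t))) a"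
          unfolding a'e by (rule cfc_compose[OF aP hc h01]) (auto, intro continuous_intros)
        moreover have "Re (\<tau> (cfc scC (\<lambda>t. complex_of_real (root m (h t))) a)) \<le> Re (\<tau> (cfc scC (\<lambda>t. complex_of_real (g t)) a))"
        proof (rule tr_cfc_mono[OF tr aP _ gc])
          show "continuous_on {0..1} (\<lambda>t. root m (h t))" by (intro continuous_intros hc)
          fix t :: real assume t: "t \<in> {0..1}"
          show "root m (h t) \<le> g t"
          proof (cases "t \<le> \<epsilon>")
            case True
            then have "h t = 0" by (simp add: h_def)
            then show ?thesis using g01[of t] by simp
          next
            case False
            then have "2 * t / \<epsilon> - 1 > 1" using \<epsilon> by (simp add: field_simps)
            then have "g t = 1" by (simp add: g_def)
            moreover have "root m (h t) \<le> 1"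
            proof (cases "m = 0")
              case True then show ?thesis by simp
            next
              case False
              have "h t \<le> 1" using h01[OF t] by simp
              then have "root m (h t) \<le> root m 1" using False by simp
              then show ?thesis using False by simp
            qed
            ultimately show ?thesis by simp
          qed
        qed
        ultimately show "Re (\<tau> (cfc scC (\<lambda>t. complex_of_real (root m t)) a')) \<le> Re (\<tau> (cfc scC (\<lambda>t. complex_of_real (g t)) a))"
          by simp
      qed
    qed simp
    have s2: "Re (\<tau> (cfc scC (\<lambda>t. complex_of_real (g t)) a)) < Re (\<tau> (cfc scC (\<lambda>t. complex_of_real (g t)) b)) + \<gamma>/3"
    proof -
      have "Re (\<tau> (cfc scC (\<lambda>t. complex_of_real (g t)) a - cfc scC (\<lambda>t. complex_of_real (g t)) b))
          \<le> norm2 star \<tau> (cfc scC (\<lambda>t. complex_of_real (g t)) a - cfc scC (\<lambda>t. complex_of_real (g t)) b)"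
        by (rule tr_re_le_norm2[OF tr])
      also have "\<dots> < \<gamma>/3" by (rule H[OF a b tr ab])
      finally show ?thesis by (simp add: tr_diff[OF tr])
    qed
    have s3: "Re (\<tau> (cfc scC (\<lambda>t. complex_of_real (g t)) b)) \<le> dim_fun scC \<tau> b + \<gamma>/3"
    proof -
      have rc: "continuous_on {0..1} (\<lambda>t. root n t + \<gamma>/3)" by (intro continuous_intros)
      have "Re (\<tau> (cfc scC (\<lambda>t. complex_of_real (g t)) b)) \<le> Re (\<tau> (cfc scC (\<lambda>t. complex_of_real (root n t + \<gamma>/3)) b))"
      proof (rule tr_cfc_mono[OF tr bP gc rc])
        fix t :: real assume t: "t \<in> {0..1}"
        show "g t \<le> root n t + \<gamma>/3"
        proof (cases "t \<le> \<epsilon>/2")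
          case True
          then have "2 * t / \<epsilon> - 1 \<le> 0" using \<epsilon> by (simp add: field_simps)
          then have "g t = 0" by (simp add: g_def)
          then show ?thesis using t \<gamma> real_root_ge_zero[of t n] by simp
        next
          case False
          then have "root n (\<epsilon>/2) \<le> root n t" using n(1) by simp
          then show ?thesis using n(2) g01[of t] by simp
        qed
      qed
      also have "cfc scC (\<lambda>t. complex_of_real (root n t + \<gamma>/3)) b
          = cfc scC (\<lambda>t. complex_of_real (root n t)) b + cfc scC (\<lambda>t. complex_of_real (\<gamma>/3)) b"
        unfolding of_real_add by (rule cfc_add[OF bP]) (intro continuous_intros, rule continuous_on_const)
      also have "Re (\<tau> \<dots>) = Re (\<tau> (cfc scC (\<lambda>t. complex_of_real (root n t)) b)) + \<gamma>/3"
        by (simp add: tr_add[OF tr] tr_cfc_const[OF tr bP])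
      also have "\<dots> \<le> dim_fun scC \<tau> b + \<gamma>/3" using dim_fun_lim(2)[OF tr bP, of n] by simp
      finally show ?thesis .
    qed
    from s1 s2 s3 \<gamma> show "dim_fun scC \<tau> (cut_down scC \<epsilon> a) < dim_fun scC \<tau> b + \<gamma>"
      by (simp add: a'_def)
  qed
qed

end


theorem lemma3p1:
  fixes star :: "'a::{real_normed_algebra_1,banach} \<Rightarrow> 'a"
    and scC :: "complex \<Rightarrow> 'a \<Rightarrow> 'a"
    and \<gamma> \<epsilon> :: real
  assumes "unital_cstar_algebra star scC"
    and "\<gamma> > 0" and "\<epsilon> > 0"
  shows "(\<forall>f :: real \<Rightarrow> complex. continuous_on {0..1} f \<longrightarrow>
            (\<exists>\<delta>>0. \<forall>a b \<tau>. positive_contraction star a \<longrightarrow> positive_contraction star b \<longrightarrow>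
                tracial_state star scC \<tau> \<longrightarrow> norm2 star \<tau> (a - b) < \<delta> \<longrightarrow>
                norm2 star \<tau> (cfc scC f a - cfc scC f b) < \<gamma>))
       \<and> (\<exists>\<delta>>0. \<forall>a b \<tau>. positive_contraction star a \<longrightarrow> positive_contraction star b \<longrightarrow>
                tracial_state star scC \<tau> \<longrightarrow> norm2 star \<tau> (a - b) < \<delta> \<longrightarrow>
                dim_fun scC \<tau> (cut_down scC \<epsilon> a) < dim_fun scC \<tau> b + \<gamma>)"
proof -
  interpret C: unital_cstar_algebra star scC by (rule assms(1))
  show ?thesis
  proof (intro conjI allI impI)
    fix f :: "real \<Rightarrow> complex"
    assume "continuous_on {0..1} f"
    then show "\<exists>\<delta>>0. \<forall>a b \<tau>. positive_contraction star a \<longrightarrow> positive_contraction star b \<longrightarrow>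
                tracial_state star scC \<tau> \<longrightarrow> norm2 star \<tau> (a - b) < \<delta> \<longrightarrow>
                norm2 star \<tau> (cfc scC f a - cfc scC f b) < \<gamma>"
      by (rule C.part1) (rule assms(2))
  next
    show "\<exists>\<delta>>0. \<forall>a b \<tau>. positive_contraction star a \<longrightarrow> positive_contraction star b \<longrightarrow>
                tracial_state star scC \<tau> \<longrightarrow> norm2 star \<tau> (a - b) < \<delta> \<longrightarrow>
                dim_fun scC \<tau> (cut_down scC \<epsilon> a) < dim_fun scC \<tau> b + \<gamma>"
      by (rule C.part2) (rule assms(2), rule assms(3))
  qed
qed

end
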